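(* Let $N\ge3$, $z=\lfloor N/2\rfloor$, $n=\lfloor(N+1)/2\rfloor$ and let $\nu_1,\dots,\nu_z,\rho_1,\dots,\rho_{n-1}$ be nonzero complex numbers. Consider $$r=\sum_{k=0}^{z-1}\nu_{k+1}\Big(H^{\mathcal P}_{k+1}\wedge E_{k+1,N-k}+\sum_{s=k+2}^{N-k-1}E_{k+1,s}\wedge E_{s,N-k}\Big)+\sum_{i=1}^{n-1}\rho_iH^\perp_i\wedge E_{i,N-i}\ \in\Lambda^2 sl(N).$$ Then there is an injective Lie algebra homomorphism $\varphi:\mathfrak g\to sl(N)$ with image contained in the Borel subalgebra $\mathfrak b^+$ of upper triangular traceless matrices such that $r\in\Lambda^2\varphi(\mathfrak g)$ and $r$ is nondegenerate as an element of $\Lambda^2\varphi(\mathfrak g)$. Consequently the carrier of $r$ is $\varphi(\mathfrak g)$, a Lie algebra isomorphic to $\mathfrak g$ of dimension $(N^2+N-2n)/2$.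
   Context: $E_{ij}$ are the matrix units of $gl(N)$ over $\mathbb C$, $I=\sum_sE_{ss}$, $a\wedge b:=a\otimes b-b\otimes a$. $H^{\mathcal P}_k:=E_{kk}-\frac1NI$; $H^\perp_i:=\frac{N-2i}{N}I-\sum_{m=i+1}^{N-i}E_{mm}$. Let $\mathfrak g\subset sl(N)$ be the subalgebra spanned by the Cartan subalgebra of diagonal traceless matrices (equivalently by $H^{\mathcal P}_1,\dots,H^{\mathcal P}_z,H^\perp_1,\dots,H^\perp_{n-1}$) together with all $E_{lm}$, $l<m$, except $E_{j,j+1}$ for $z+1\le j\le N-1$; explicitly the root vectors are $E_{lm}$ with ($1\le l<m\le z$), or ($1\le l\le z<m\le N$), or ($z+1\le l$, $l+2\le m\le N$). The carrier of $r\in\Lambda^2 sl(N)$ is the smallest Lie subalgebra $\mathfrak c\subset sl(N)$ with $r\in\Lambda^2\mathfrak c$; $r\in\Lambda^2\mathfrak c$ is nondegenerate if the induced map $\mathfrak c^*\to\mathfrak c$ is bijective. *)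

theory Defs
  imports Complex_Main "HOL-Library.Function_Algebras"
begin

text \<open>N x N complex matrices are represented as functions nat => nat => complex with
 indices in {1..N} (entries outside are 0).  Elements of gl(N) (x) gl(N) are represented by
 their coefficient functions: T i j k l is the coefficient of E_ij (x) E_kl.\<close>

type_synonym cmat = "nat \<Rightarrow> nat \<Rightarrow> complex"
type_synonym ctens = "nat \<Rightarrow> nat \<Rightarrow> nat \<Rightarrow> nat \<Rightarrow> complex"

definition gl :: "nat \<Rightarrow> cmat set" where
  "gl N = {A. \<forall>i j. (i \<notin> {1..N} \<or> j \<notin> {1..N}) \<longrightarrow> A i j = 0}"

definition mtrace :: "nat \<Rightarrow> cmat \<Rightarrow> complex" where
  "mtrace N A = (\<Sum>i\<in>{1..N}. A i i)"

definition sl :: "nat \<Rightarrow> cmat set" where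
  "sl N = {A \<in> gl N. mtrace N A = 0}"

definition msmult :: "complex \<Rightarrow> cmat \<Rightarrow> cmat" where
  "msmult c A = (\<lambda>i j. c * A i j)"

definition mmult :: "nat \<Rightarrow> cmat \<Rightarrow> cmat \<Rightarrow> cmat" where
  "mmult N A B = (\<lambda>i k. \<Sum>j\<in>{1..N}. A i j * B j k)"

definition bracket :: "nat \<Rightarrow> cmat \<Rightarrow> cmat \<Rightarrow> cmat" where
  "bracket N A B = mmult N A B - mmult N B A"

definition E :: "nat \<Rightarrow> nat \<Rightarrow> cmat" where
  "E i j = (\<lambda>a b. if a = i \<and> b = j then 1 else 0)"

definition Id :: "nat \<Rightarrow> cmat" where
  "Id N = (\<Sum>s\<in>{1..N}. E s s)"

definition HP :: "nat \<Rightarrow> nat \<Rightarrow> cmat" where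
  "HP N k = E k k - msmult (1 / of_nat N) (Id N)"

definition Hperp :: "nat \<Rightarrow> nat \<Rightarrow> cmat" where
  "Hperp N i = msmult ((of_nat N - 2 * of_nat i) / of_nat N) (Id N)
               - (\<Sum>m\<in>{i+1..N-i}. E m m)"

definition tens :: "cmat \<Rightarrow> cmat \<Rightarrow> ctens" where
  "tens a b = (\<lambda>i j k l. a i j * b k l)"

definition wedge :: "cmat \<Rightarrow> cmat \<Rightarrow> ctens" where
  "wedge a b = tens a b - tens b a"

definition tsmult :: "complex \<Rightarrow> ctens \<Rightarrow> ctens" where
  "tsmult c T = (\<lambda>i j k l. c * T i j k l)"

definition lie_subalgebra :: "nat \<Rightarrow> cmat set \<Rightarrow> bool" where
  "lie_subalgebra N c \<longleftrightarrow> c \<subseteq> sl N \<and> 0 \<in> c \<and>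
     (\<forall>a\<in>c. \<forall>b\<in>c. a + b \<in> c) \<and> (\<forall>x. \<forall>a\<in>c. msmult x a \<in> c) \<and>
     (\<forall>a\<in>c. \<forall>b\<in>c. bracket N a b \<in> c)"

definition in_tensor2 :: "cmat set \<Rightarrow> ctens \<Rightarrow> bool" where
  "in_tensor2 c r \<longleftrightarrow> (\<exists>ps. set ps \<subseteq> c \<times> c \<and> r = (\<Sum>(a,b)\<leftarrow>ps. tens a b))"

definition in_wedge2 :: "cmat set \<Rightarrow> ctens \<Rightarrow> bool" where
  "in_wedge2 c r \<longleftrightarrow> in_tensor2 c r \<and> (\<forall>i j k l. r k l i j = - r i j k l)"

text \<open>Linear functionals on c are represented by matrices F via the trace pairing
  <F,a> = sum F_ij a_ij (every functional on c extends to gl(N), two represent the same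
  functional iff they agree on c).  The induced map c^* -> c is F |-> (F (x) id)(r).\<close>
definition pairing :: "nat \<Rightarrow> cmat \<Rightarrow> cmat \<Rightarrow> complex" where
  "pairing N F a = (\<Sum>i\<in>{1..N}. \<Sum>j\<in>{1..N}. F i j * a i j)"

definition induced_map :: "nat \<Rightarrow> ctens \<Rightarrow> cmat \<Rightarrow> cmat" where
  "induced_map N r F = (\<lambda>k l. \<Sum>i\<in>{1..N}. \<Sum>j\<in>{1..N}. F i j * r i j k l)"

definition nondegenerate :: "nat \<Rightarrow> cmat set \<Rightarrow> ctens \<Rightarrow> bool" where
  "nondegenerate N c r \<longleftrightarrow> in_wedge2 c r \<and>
     (\<forall>F. induced_map N r F \<in> c) \<and>
     (\<forall>y\<in>c. \<exists>F. induced_map N r F = y) \<and>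
     (\<forall>F. induced_map N r F = 0 \<longrightarrow> (\<forall>a\<in>c. pairing N F a = 0))"

definition is_carrier :: "nat \<Rightarrow> ctens \<Rightarrow> cmat set \<Rightarrow> bool" where
  "is_carrier N r c \<longleftrightarrow> lie_subalgebra N c \<and> in_wedge2 c r \<and>
     (\<forall>d. lie_subalgebra N d \<and> in_wedge2 d r \<longrightarrow> c \<subseteq> d)"

definition mdim :: "cmat set \<Rightarrow> nat" where
  "mdim S = vector_space.dim msmult S"

definition borel :: "nat \<Rightarrow> cmat set" where
  "borel N = {A \<in> sl N. \<forall>i j. j < i \<longrightarrow> A i j = 0}"

definition galg :: "nat \<Rightarrow> cmat set" where
  "galg N = {A \<in> borel N. \<forall>j. N div 2 + 1 \<le> j \<and> j \<le> N - 1 \<longrightarrow> A j (j+1) = 0}"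

definition lie_hom_on :: "nat \<Rightarrow> cmat set \<Rightarrow> (cmat \<Rightarrow> cmat) \<Rightarrow> bool" where
  "lie_hom_on N g \<phi> \<longleftrightarrow>
     (\<forall>a\<in>g. \<forall>b\<in>g. \<phi> (a + b) = \<phi> a + \<phi> b) \<and>
     (\<forall>x. \<forall>a\<in>g. \<phi> (msmult x a) = msmult x (\<phi> a)) \<and>
     (\<forall>a\<in>g. \<forall>b\<in>g. \<phi> (bracket N a b) = bracket N (\<phi> a) (\<phi> b))"

definition r_tensor :: "nat \<Rightarrow> (nat \<Rightarrow> complex) \<Rightarrow> (nat \<Rightarrow> complex) \<Rightarrow> ctens" where
  "r_tensor N \<nu> \<rho> =
     (\<Sum>k\<in>{0..<N div 2}. tsmult (\<nu> (k+1))
         (wedge (HP N (k+1)) (E (k+1) (N-k)) +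
          (\<Sum>s\<in>{k+2..N-k-1}. wedge (E (k+1) s) (E s (N-k)))))
   + (\<Sum>i\<in>{1..(N+1) div 2 - 1}. tsmult (\<rho> i) (wedge (Hperp N i) (E i (N-i))))"

end

theory Submission
  imports Defs
begin

lemma sum_fun_apply: "(\<Sum>s\<in>S. f s) x = (\<Sum>s\<in>S. f s x)"
  by (induct S rule: infinite_finite_induct) auto

lemma E_apply: "E i j a b = (if a = i \<and> b = j then 1 else 0)"
  by (simp add: E_def)

lemma Id_apply: "Id N a b = (if a = b \<and> a \<in> {1..N} then 1 else 0)"
proof -
  have "Id N a b = (\<Sum>s\<in>{1..N}. if a = s \<and> b = s then 1 else 0)"
    unfolding Id_def sum_fun_apply E_apply by simp
  also have "\<dots> = (\<Sum>s\<in>{1..N}. if s = a then (if a = b then 1 else 0) else 0)"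
    by (rule sum.cong) auto
  also have "\<dots> = (if a = b \<and> a \<in> {1..N} then 1 else 0)"
    by (simp add: sum.delta')
  finally show ?thesis .
qed

lemma msmult_apply[simp]: "msmult c A a b = c * A a b"
  by (simp add: msmult_def)

lemma mmult_assoc: "mmult N (mmult N A B) C = mmult N A (mmult N B C)"
  unfolding mmult_def
  by (auto simp: fun_eq_iff sum_distrib_left sum_distrib_right mult.assoc intro: sum.swap)

lemma mmult_add_left: "mmult N (A + B) C = mmult N A C + mmult N B C"
  by (simp add: mmult_def fun_eq_iff distrib_right sum.distrib)
lemma mmult_add_right: "mmult N C (A + B) = mmult N C A + mmult N C B"
  by (simp add: mmult_def fun_eq_iff distrib_left sum.distrib)
lemma mmult_diff_left: "mmult N (A - B) C = mmult N A C - mmult N B C"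
  by (simp add: mmult_def fun_eq_iff left_diff_distrib sum_subtractf)
lemma mmult_diff_right: "mmult N C (A - B) = mmult N C A - mmult N C B"
  by (simp add: mmult_def fun_eq_iff right_diff_distrib sum_subtractf)
lemma mmult_smult_left: "mmult N (msmult c A) B = msmult c (mmult N A B)"
  by (simp add: mmult_def fun_eq_iff sum_distrib_left mult.assoc)
lemma mmult_smult_right: "mmult N A (msmult c B) = msmult c (mmult N A B)"
  by (simp add: mmult_def fun_eq_iff sum_distrib_left mult.assoc mult.left_commute)

lemma gl_iff: "A \<in> gl N \<longleftrightarrow> (\<forall>i j. (i \<notin> {1..N} \<or> j \<notin> {1..N}) \<longrightarrow> A i j = 0)"
  by (simp add: gl_def)

lemma mmult_Id_right: "A \<in> gl N \<Longrightarrow> mmult N A (Id N) = A"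
proof (rule ext, rule ext)
  fix i k assume A: "A \<in> gl N"
  have "mmult N A (Id N) i k = (\<Sum>j\<in>{1..N}. if j = k then A i k else 0)"
    unfolding mmult_def Id_apply by (rule sum.cong) auto
  also have "\<dots> = A i k" using A by (auto simp: sum.delta' gl_iff)
  finally show "mmult N A (Id N) i k = A i k" .
qed

lemma mmult_Id_left: "A \<in> gl N \<Longrightarrow> mmult N (Id N) A = A"
proof (rule ext, rule ext)
  fix i k assume A: "A \<in> gl N"
  have "mmult N (Id N) A i k = (\<Sum>j\<in>{1..N}. if j = i then A i k else 0)"
    unfolding mmult_def Id_apply by (rule sum.cong) auto
  also have "\<dots> = A i k" using A by (auto simp: sum.delta' gl_iff)
  finally show "mmult N (Id N) A i k = A i k" .
qed

lemma mmult_gl: "A \<in> gl N \<Longrightarrow> B \<in> gl N \<Longrightarrow> mmult N A B \<in> gl N"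
  by (auto simp: gl_iff mmult_def)

interpretation mv: vector_space msmult
  by unfold_locales (auto simp: msmult_def fun_eq_iff algebra_simps)


definition ut :: "nat \<Rightarrow> cmat \<Rightarrow> bool" where
  "ut N A \<longleftrightarrow> A \<in> gl N \<and> (\<forall>i j. j < i \<longrightarrow> A i j = 0)"

lemma ut_glD: "ut N A \<Longrightarrow> i \<notin> {1..N} \<or> j \<notin> {1..N} \<Longrightarrow> A i j = 0"
  by (auto simp: ut_def gl_iff)

lemma ut_lowD: "ut N A \<Longrightarrow> j < i \<Longrightarrow> A i j = 0"
  by (auto simp: ut_def)

lemma ut_mult_low: "ut N A \<Longrightarrow> ut N B \<Longrightarrow> k < i \<Longrightarrow> mmult N A B i k = 0"
  unfolding mmult_def
  by (rule sum.neutral) (metis less_trans linorder_neqE_nat mult_not_zero ut_lowD)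

lemma ut_mult: "ut N A \<Longrightarrow> ut N B \<Longrightarrow> ut N (mmult N A B)"
  unfolding ut_def by (auto intro: mmult_gl ut_mult_low[unfolded ut_def])

lemma ut_mult_diag: assumes "ut N A" "ut N B" shows "mmult N A B i i = A i i * B i i"
proof -
  have "mmult N A B i i = (\<Sum>j\<in>{1..N}. if j = i then A i i * B i i else 0)"
    unfolding mmult_def
    by (rule sum.cong) (use assms in \<open>auto dest: ut_lowD simp: linorder_neq_iff\<close>)
  also have "\<dots> = A i i * B i i" using assms by (auto simp: sum.delta' ut_glD)
  finally show ?thesis .
qed

lemma ut_mult_sup: assumes "ut N A" "ut N B"
  shows "mmult N A B i (Suc i) = A i i * B i (Suc i) + A i (Suc i) * B (Suc i) (Suc i)"
proof -
  have "mmult N A B i (Suc i) = (\<Sum>j\<in>{1..N}. (if j = i then A i i * B i (Suc i) else 0)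
          + (if j = Suc i then A i (Suc i) * B (Suc i) (Suc i) else 0))"
    unfolding mmult_def
  proof (rule sum.cong)
    fix j assume "j \<in> {1..N}"
    show "A i j * B j (Suc i) = (if j = i then A i i * B i (Suc i) else 0)
          + (if j = Suc i then A i (Suc i) * B (Suc i) (Suc i) else 0)"
    proof (cases "j = i \<or> j = Suc i")
      case True then show ?thesis by auto
    next
      case False
      then have "j < i \<or> Suc i < j" by auto
      then show ?thesis using False assms by (auto dest: ut_lowD)
    qed
  qed simp
  also have "\<dots> = A i i * B i (Suc i) + A i (Suc i) * B (Suc i) (Suc i)"
    using assms by (auto simp: sum.distrib sum.delta' ut_glD)
  finally show ?thesis .
qed

lemma Id_ut: "ut N (Id N)"
  by (auto simp: ut_def gl_iff Id_apply)


locale rset =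
  fixes N :: nat and nu rho :: "nat \<Rightarrow> complex"
  assumes N3: "3 \<le> N"
    and nu_nz: "\<forall>k\<in>{1..N div 2}. nu k \<noteq> 0"
    and rho_nz: "\<forall>i\<in>{1..(N+1) div 2 - 1}. rho i \<noteq> 0"
begin

definition zz :: nat where "zz = N div 2"

lemma zz_facts: "1 \<le> zz" "2*zz \<le> N" "N \<le> 2*zz+1" "(N+1) div 2 = N - zz"
  using N3 unfolding zz_def by auto

definition cnd :: "nat \<Rightarrow> bool" where "cnd j \<longleftrightarrow> zz+1 \<le> j \<and> j \<le> N-1"

definition tt :: "nat \<Rightarrow> complex" where "tt j = - nu (N-j) / rho (N-j)"

definition PP :: cmat where
  "PP = (\<lambda>a b. (if b = a \<and> a \<in> {1..N} then 1 else 0) + (if b = Suc a \<and> cnd a then tt a else 0))"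

definition QQ :: cmat where
  "QQ = (\<lambda>a b. if a \<in> {1..N} \<and> b \<in> {1..N} \<and> a \<le> b \<and> (a = b \<or> zz+1 \<le> a)
           then (-1)^(b-a) * (\<Prod>j\<in>{a..<b}. tt j) else 0)"

lemma cnd_range: "cnd j \<Longrightarrow> j \<in> {1..N} \<and> Suc j \<in> {1..N}"
  using zz_facts by (auto simp: cnd_def)

lemma QQ_rec1: assumes "cnd a" "a < b" "b \<le> N" shows "QQ a b = - tt a * QQ (Suc a) b"
proof -
  have "{a..<b} = insert a {Suc a..<b}" using assms by auto
  then have p: "(\<Prod>j\<in>{a..<b}. tt j) = tt a * (\<Prod>j\<in>{Suc a..<b}. tt j)" by simp
  have e: "b - a = Suc (b - Suc a)" using assms by auto
  show ?thesis using assms cnd_range[OF assms(1)] unfolding QQ_def p e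
    by (auto simp: cnd_def)
qed

lemma QQ_rec2: assumes "zz+1 \<le> a" "a < b" "b \<le> N" shows "QQ a b = - QQ a (b-1) * tt (b-1)"
proof -
  obtain b' where b: "b = Suc b'" using assms by (cases b) auto
  have p: "(\<Prod>j\<in>{a..<b}. tt j) = (\<Prod>j\<in>{a..<b'}. tt j) * tt b'"
    using assms b by (simp add: prod.atLeastLessThan_Suc)
  have e: "b - a = Suc (b' - a)" using assms b by auto
  show ?thesis using assms zz_facts unfolding QQ_def p b
    by (auto simp: Suc_diff_le)
qed

lemma QQ_diag: "a \<in> {1..N} \<Longrightarrow> QQ a a = 1"
  by (simp add: QQ_def)

lemma QQ_sup: "cnd a \<Longrightarrow> QQ a (Suc a) = - tt a"
  using cnd_range[of a] by (auto simp: QQ_def cnd_def)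

lemma QQ_low: "b < a \<Longrightarrow> QQ a b = 0"
  by (simp add: QQ_def)

lemma PQ: "mmult N PP QQ = Id N"
proof (rule ext, rule ext)
  fix a b
  have "mmult N PP QQ a b = (\<Sum>c\<in>{1..N}. (if c = a then (if a \<in> {1..N} then QQ a b else 0) else 0)
       + (if c = Suc a then (if cnd a then tt a * QQ (Suc a) b else 0) else 0))"
    unfolding mmult_def PP_def by (rule sum.cong) auto
  also have "\<dots> = (if a \<in> {1..N} then QQ a b else 0) + (if cnd a then tt a * QQ (Suc a) b else 0)"
    using cnd_range[of a] by (auto simp: sum.distrib sum.delta')
  also have "\<dots> = Id N a b"
  proof (cases "a \<in> {1..N}")
    case False
    then show ?thesis using cnd_range[of a] by (auto simp: Id_apply)
  next
    case aN: True
    show ?thesis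
    proof (cases "cnd a")
      case True
      have "b = a \<or> (a < b \<and> b \<le> N) \<or> b < a \<or> N < b" by auto
      then show ?thesis
      proof (elim disjE)
        assume "b = a" then show ?thesis using aN True by (simp add: QQ_diag QQ_low Id_apply)
      next
        assume "a < b \<and> b \<le> N" then show ?thesis using aN True by (simp add: QQ_rec1 Id_apply)
      next
        assume "b < a" then show ?thesis using aN True by (simp add: QQ_low Id_apply)
      next
        assume "N < b" then show ?thesis using aN True by (simp add: QQ_def Id_apply)
      qed
    next
      case False
      then show ?thesis using aN zz_facts by (auto simp: QQ_def Id_apply cnd_def)
    qed
  qed
  finally show "mmult N PP QQ a b = Id N a b" .
qed

lemma QP: "mmult N QQ PP = Id N"
proof (rule ext, rule ext)
  fix a b
  have "mmult N QQ PP a b = (\<Sum>c\<in>{1..N}. (if c = b then (if b \<in> {1..N} then QQ a b else 0) else 0)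
       + (if c = b - 1 then (if b \<noteq> 0 \<and> cnd (b-1) then QQ a (b-1) * tt (b-1) else 0) else 0))"
    unfolding mmult_def PP_def by (rule sum.cong) auto
  also have "\<dots> = (if b \<in> {1..N} then QQ a b else 0) + (if b \<noteq> 0 \<and> cnd (b-1) then QQ a (b-1) * tt (b-1) else 0)"
    using cnd_range[of "b-1"] by (auto simp: sum.distrib sum.delta')
  also have "\<dots> = Id N a b"
  proof (cases "b \<in> {1..N}")
    case False
    then show ?thesis using cnd_range[of "b-1"] by (auto simp: Id_apply)
  next
    case bN: True
    show ?thesis
    proof (cases "b \<noteq> 0 \<and> cnd (b-1)")
      case True
      have "b = a \<or> (a < b \<and> zz+1 \<le> a) \<or> (a < b \<and> a < zz+1) \<or> b < a" by auto
      then show ?thesis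
      proof (elim disjE)
        assume "b = a" then show ?thesis using bN True by (simp add: QQ_diag QQ_low Id_apply)
      next
        assume "a < b \<and> zz+1 \<le> a" then show ?thesis using bN True by (simp add: QQ_rec2 Id_apply)
      next
        assume "a < b \<and> a < zz+1" then show ?thesis using bN True
          by (auto simp: QQ_def Id_apply cnd_def)
      next
        assume "b < a" then show ?thesis using bN True by (simp add: QQ_low Id_apply)
      qed
    next
      case False
      then show ?thesis using bN zz_facts by (auto simp: QQ_def Id_apply cnd_def)
    qed
  qed
  finally show "mmult N QQ PP a b = Id N a b" .
qed

lemma PP_ut: "ut N PP"
  using cnd_range by (auto simp: ut_def gl_iff PP_def)

lemma QQ_ut: "ut N QQ"
  by (auto simp: ut_def gl_iff QQ_def)

lemma PP_diag: "a \<in> {1..N} \<Longrightarrow> PP a a = 1"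
  by (simp add: PP_def)

lemma PP_sup: "PP a (Suc a) = (if cnd a then tt a else 0)"
  by (simp add: PP_def)

lemma QQ_sup': "QQ a (Suc a) = (if cnd a then - tt a else 0)"
  using QQ_sup zz_facts by (auto simp: QQ_def cnd_def)

end

context rset
begin

definition phi :: "cmat \<Rightarrow> cmat" where "phi A = mmult N PP (mmult N A QQ)"
definition phinv :: "cmat \<Rightarrow> cmat" where "phinv A = mmult N QQ (mmult N A PP)"

lemma PP_gl: "PP \<in> gl N" using PP_ut by (simp add: ut_def)
lemma QQ_gl: "QQ \<in> gl N" using QQ_ut by (simp add: ut_def)

lemma QP_cancel: "X \<in> gl N \<Longrightarrow> mmult N QQ (mmult N PP X) = X"
  by (simp add: mmult_assoc[symmetric] QP mmult_Id_left)
lemma PQ_cancel: "X \<in> gl N \<Longrightarrow> mmult N PP (mmult N QQ X) = X"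
  by (simp add: mmult_assoc[symmetric] PQ mmult_Id_left)

lemma phi_gl: "A \<in> gl N \<Longrightarrow> phi A \<in> gl N"
  by (simp add: phi_def mmult_gl PP_gl QQ_gl)

lemma phi_add: "phi (A + B) = phi A + phi B"
  by (simp add: phi_def mmult_add_left mmult_add_right)
lemma phi_smult: "phi (msmult c A) = msmult c (phi A)"
  by (simp add: phi_def mmult_smult_left mmult_smult_right)
lemma phi_diff: "phi (A - B) = phi A - phi B"
  by (simp add: phi_def mmult_diff_left mmult_diff_right)

lemma phi_mult: "A \<in> gl N \<Longrightarrow> B \<in> gl N \<Longrightarrow> mmult N (phi A) (phi B) = phi (mmult N A B)"
  unfolding phi_def
  by (simp add: mmult_assoc QP_cancel mmult_gl QQ_gl)

lemma phi_bracket: "A \<in> gl N \<Longrightarrow> B \<in> gl N \<Longrightarrow> phi (bracket N A B) = bracket N (phi A) (phi B)"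
  by (simp add: bracket_def phi_diff phi_mult)

lemma phinv_phi: "A \<in> gl N \<Longrightarrow> phinv (phi A) = A"
  unfolding phi_def phinv_def
  by (simp add: mmult_assoc[symmetric] QP mmult_Id_left mmult_gl PP_gl)
     (simp add: mmult_assoc QP mmult_Id_right)

lemma phi_phinv: "A \<in> gl N \<Longrightarrow> phi (phinv A) = A"
  unfolding phi_def phinv_def
  by (simp add: mmult_assoc[symmetric] PQ mmult_Id_left mmult_gl QQ_gl)
     (simp add: mmult_assoc PQ mmult_Id_right)

lemma PP_diag': "PP i i = (if i \<in> {1..N} then 1 else 0)"
  by (simp add: PP_def)
lemma QQ_diag': "QQ i i = (if i \<in> {1..N} then 1 else 0)"
  by (simp add: QQ_def)

lemma ut_diag0: "ut N A \<Longrightarrow> i \<notin> {1..N} \<Longrightarrow> A i j = 0"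
  by (simp add: ut_glD)

lemma phi_ut: "ut N A \<Longrightarrow> ut N (phi A)"
  unfolding phi_def by (intro ut_mult PP_ut QQ_ut)
lemma phinv_ut: "ut N A \<Longrightarrow> ut N (phinv A)"
  unfolding phinv_def by (intro ut_mult PP_ut QQ_ut)

lemma phi_diag: assumes "ut N A" shows "phi A i i = A i i"
proof -
  have u: "ut N (mmult N A QQ)" using assms QQ_ut by (rule ut_mult)
  show ?thesis unfolding phi_def
    using assms by (simp add: ut_mult_diag[OF PP_ut u] ut_mult_diag[OF assms QQ_ut] PP_diag' QQ_diag' ut_diag0)
qed

lemma phinv_diag: assumes "ut N A" shows "phinv A i i = A i i"
proof -
  have u: "ut N (mmult N A PP)" using assms PP_ut by (rule ut_mult)
  show ?thesis unfolding phinv_def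
    using assms by (simp add: ut_mult_diag[OF QQ_ut u] ut_mult_diag[OF assms PP_ut] PP_diag' QQ_diag' ut_diag0)
qed

lemma phi_sup: assumes "ut N A"
  shows "phi A j (Suc j) = A j (Suc j) + (if cnd j then tt j * (A (Suc j) (Suc j) - A j j) else 0)"
proof -
  have u: "ut N (mmult N A QQ)" using assms QQ_ut by (rule ut_mult)
  have 1: "mmult N A QQ j (Suc j) = A j j * (if cnd j then - tt j else 0) + A j (Suc j) * QQ (Suc j) (Suc j)"
    by (simp add: ut_mult_sup[OF assms QQ_ut] QQ_sup')
  have 2: "A j (Suc j) * QQ (Suc j) (Suc j) = A j (Suc j)"
    using assms by (auto simp: QQ_diag' ut_glD)
  have 3: "PP j j * mmult N A QQ j (Suc j) = mmult N A QQ j (Suc j)"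
    using u by (auto simp: PP_diag' ut_glD)
  have 4: "mmult N A QQ (Suc j) (Suc j) = A (Suc j) (Suc j)"
    using assms by (auto simp: ut_mult_diag[OF assms QQ_ut] QQ_diag' ut_glD)
  show ?thesis unfolding phi_def ut_mult_sup[OF PP_ut u] 4 1 2 PP_sup
    using assms cnd_range[of j] by (cases "j \<in> {1..N}") (auto simp: PP_diag' ut_glD algebra_simps)
qed

lemma phinv_sup: assumes "ut N A"
  shows "phinv A j (Suc j) = A j (Suc j) - (if cnd j then tt j * (A (Suc j) (Suc j) - A j j) else 0)"
proof -
  have u: "ut N (mmult N A PP)" using assms PP_ut by (rule ut_mult)
  have 1: "mmult N A PP j (Suc j) = A j j * (if cnd j then tt j else 0) + A j (Suc j) * PP (Suc j) (Suc j)"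
    by (simp add: ut_mult_sup[OF assms PP_ut] PP_sup)
  have 2: "A j (Suc j) * PP (Suc j) (Suc j) = A j (Suc j)"
    using assms by (auto simp: PP_diag' ut_glD)
  have 3: "QQ j j * mmult N A PP j (Suc j) = mmult N A PP j (Suc j)"
    using u by (auto simp: QQ_diag' ut_glD)
  have 4: "mmult N A PP (Suc j) (Suc j) = A (Suc j) (Suc j)"
    using assms by (auto simp: ut_mult_diag[OF assms PP_ut] PP_diag' ut_glD)
  show ?thesis unfolding phinv_def ut_mult_sup[OF QQ_ut u] 4 1 2 QQ_sup'
    using assms cnd_range[of j] by (cases "j \<in> {1..N}") (auto simp: QQ_diag' ut_glD algebra_simps)
qed

definition cset :: "cmat set" where
  "cset = {A. ut N A \<and> mtrace N A = 0 \<and> (\<forall>j. cnd j \<longrightarrow> A j (Suc j) = tt j * (A (Suc j) (Suc j) - A j j))}"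

lemma galg_iff: "galg N = {A. ut N A \<and> mtrace N A = 0 \<and> (\<forall>j. cnd j \<longrightarrow> A j (Suc j) = 0)}"
  by (auto simp: galg_def borel_def sl_def ut_def cnd_def zz_def)

lemma borel_iff: "borel N = {A. ut N A \<and> mtrace N A = 0}"
  by (auto simp: borel_def sl_def ut_def)

lemma mtrace_phi: "ut N A \<Longrightarrow> mtrace N (phi A) = mtrace N A"
  by (simp add: mtrace_def phi_diag)
lemma mtrace_phinv: "ut N A \<Longrightarrow> mtrace N (phinv A) = mtrace N A"
  by (simp add: mtrace_def phinv_diag)

lemma image_phi: "phi ` galg N = cset"
proof
  show "phi ` galg N \<subseteq> cset"
    by (auto simp: galg_iff cset_def phi_ut mtrace_phi phi_sup phi_diag)
next
  show "cset \<subseteq> phi ` galg N"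
  proof
    fix B assume B: "B \<in> cset"
    then have "phinv B \<in> galg N"
      by (auto simp: galg_iff cset_def phinv_ut mtrace_phinv phinv_sup phinv_diag)
    moreover have "phi (phinv B) = B" using B by (auto simp: cset_def ut_def phi_phinv)
    ultimately show "B \<in> phi ` galg N" by (metis image_eqI)
  qed
qed

lemma galg_gl: "A \<in> galg N \<Longrightarrow> A \<in> gl N"
  by (auto simp: galg_iff ut_def)

lemma lie_hom: "lie_hom_on N (galg N) phi"
  unfolding lie_hom_on_def using phi_add phi_smult phi_bracket galg_gl by blast

lemma phi_inj: "inj_on phi (galg N)"
  by (metis galg_gl inj_on_inverseI phinv_phi)

lemma cset_borel: "cset \<subseteq> borel N"
  by (auto simp: cset_def borel_iff)

end

definition skew :: "ctens \<Rightarrow> bool" where "skew T \<longleftrightarrow> (\<forall>i j k l. T k l i j = - T i j k l)"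

lemma skew_wedge: "skew (wedge a b)"
  by (simp add: skew_def wedge_def tens_def)
lemma skewD: "skew T \<Longrightarrow> T k l i j = - T i j k l"
  unfolding skew_def by blast
lemma skew_tsmult: assumes "skew T" shows "skew (tsmult c T)"
  unfolding skew_def tsmult_def
proof (intro allI)
  fix i j k l show "c * T k l i j = - (c * T i j k l)" using skewD[OF assms, of k l i j] by simp
qed
lemma skew_add: assumes "skew T" "skew U" shows "skew (T + U)"
  unfolding skew_def plus_fun_apply
proof (intro allI)
  fix i j k l show "T k l i j + U k l i j = - (T i j k l + U i j k l)"
    using skewD[OF assms(1), of k l i j] skewD[OF assms(2), of k l i j] by simp
qed
lemma skew_zero: "skew 0"
  by (simp add: skew_def)
lemma skew_sum: "(\<And>x. x \<in> S \<Longrightarrow> skew (f x)) \<Longrightarrow> skew (\<Sum>x\<in>S. f x)"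
  by (induct S rule: infinite_finite_induct) (auto intro: skew_add skew_zero)

definition subsp :: "cmat set \<Rightarrow> bool" where
  "subsp S \<longleftrightarrow> 0 \<in> S \<and> (\<forall>a\<in>S. \<forall>b\<in>S. a + b \<in> S) \<and> (\<forall>x. \<forall>a\<in>S. msmult x a \<in> S)"

lemma subsp_sum: "subsp S \<Longrightarrow> (\<And>x. x \<in> A \<Longrightarrow> f x \<in> S) \<Longrightarrow> (\<Sum>x\<in>A. f x) \<in> S"
  by (induct A rule: infinite_finite_induct) (auto simp: subsp_def)

lemma subsp_diff: "subsp S \<Longrightarrow> a \<in> S \<Longrightarrow> b \<in> S \<Longrightarrow> a - b \<in> S"
proof -
  assume s: "subsp S" "a \<in> S" "b \<in> S"
  have eq: "a - b = a + msmult (-1) b" by (simp add: msmult_def fun_eq_iff)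
  have "a + msmult (-1) b \<in> S" using s unfolding subsp_def by blast
  then show ?thesis by (simp only: eq)
qed

lemma lie_subalgebra_subsp: "lie_subalgebra N S \<Longrightarrow> subsp S"
  by (simp add: lie_subalgebra_def subsp_def)

lemma in_tensor2_zero: "in_tensor2 S 0"
  unfolding in_tensor2_def by (rule exI[of _ "[]"]) simp

lemma in_tensor2_add: "in_tensor2 S T \<Longrightarrow> in_tensor2 S U \<Longrightarrow> in_tensor2 S (T + U)"
  unfolding in_tensor2_def
  by (metis (no_types, lifting) map_append set_append sum_list_append Un_subset_iff)

lemma in_tensor2_tens: "a \<in> S \<Longrightarrow> b \<in> S \<Longrightarrow> in_tensor2 S (tens a b)"
  unfolding in_tensor2_def by (rule exI[of _ "[(a,b)]"]) simp

lemma tens_smult: "tsmult c (tens a b) = tens (msmult c a) b"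
  by (simp add: tsmult_def tens_def msmult_def fun_eq_iff mult.assoc)

lemma in_tensor2_tsmult: "subsp S \<Longrightarrow> in_tensor2 S T \<Longrightarrow> in_tensor2 S (tsmult c T)"
proof -
  assume s: "subsp S" and "in_tensor2 S T"
  then obtain ps where ps: "set ps \<subseteq> S \<times> S" "T = (\<Sum>(a,b)\<leftarrow>ps. tens a b)"
    unfolding in_tensor2_def by blast
  have "tsmult c (\<Sum>(a,b)\<leftarrow>ps. tens a b) = (\<Sum>(a,b)\<leftarrow>map (\<lambda>(a,b). (msmult c a, b)) ps. tens a b)"
    by (induct ps) (auto simp: tsmult_def tens_def fun_eq_iff distrib_left mult.assoc)
  moreover have "set (map (\<lambda>(a,b). (msmult c a, b)) ps) \<subseteq> S \<times> S"
    using ps(1) s by (auto simp: subsp_def)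
  ultimately show ?thesis using ps(2) unfolding in_tensor2_def by metis
qed

lemma in_tensor2_wedge: "subsp S \<Longrightarrow> a \<in> S \<Longrightarrow> b \<in> S \<Longrightarrow> in_tensor2 S (wedge a b)"
proof -
  assume s: "subsp S" "a \<in> S" "b \<in> S"
  have "wedge a b = tens a b + tsmult (-1) (tens b a)"
    by (simp add: wedge_def tens_def tsmult_def fun_eq_iff)
  then show ?thesis using s by (metis in_tensor2_add in_tensor2_tens in_tensor2_tsmult)
qed

lemma in_tensor2_sum: "(\<And>x. x \<in> A \<Longrightarrow> in_tensor2 S (f x)) \<Longrightarrow> in_tensor2 S (\<Sum>x\<in>A. f x)"
  by (induct A rule: infinite_finite_induct) (auto intro: in_tensor2_add in_tensor2_zero)

lemma in_tensor2_mono: "in_tensor2 S T \<Longrightarrow> S \<subseteq> S' \<Longrightarrow> in_tensor2 S' T"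
  unfolding in_tensor2_def by blast

lemma induced_map_tens: "induced_map N (tens a b) F = msmult (pairing N F a) b"
  by (simp add: induced_map_def tens_def pairing_def fun_eq_iff sum_distrib_right mult.assoc)

lemma induced_map_add: "induced_map N (T + U) F = induced_map N T F + induced_map N U F"
  by (simp add: induced_map_def fun_eq_iff distrib_left sum.distrib)

lemma induced_map_zero: "induced_map N 0 F = 0"
  by (simp add: induced_map_def fun_eq_iff)

lemma induced_map_in: assumes "subsp S" "in_tensor2 S T" shows "induced_map N T F \<in> S"
proof -
  obtain ps where ps: "set ps \<subseteq> S \<times> S" "T = (\<Sum>(a,b)\<leftarrow>ps. tens a b)"
    using assms(2) unfolding in_tensor2_def by blast
  have "set ps \<subseteq> S \<times> S \<Longrightarrow> induced_map N (\<Sum>(a,b)\<leftarrow>ps. tens a b) F \<in> S"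
  proof (induct ps)
    case Nil
    have "induced_map N (\<Sum>(a,b)\<leftarrow>[]. tens a b) F = 0"
      by (simp add: induced_map_def fun_eq_iff)
    then show ?case using assms(1) by (simp only: subsp_def)
  next
    case (Cons p ps)
    obtain a b where p: "p = (a,b)" by (cases p)
    have eq: "(\<Sum>(a,b)\<leftarrow>(p#ps). tens a b) = tens a b + (\<Sum>(a,b)\<leftarrow>ps. tens a b)"
      by (simp add: p)
    have ab: "a \<in> S" "b \<in> S" and pS: "set ps \<subseteq> S \<times> S" using Cons(2) p by auto
    have "msmult (pairing N F a) b \<in> S" using assms(1) ab unfolding subsp_def by blast
    moreover have "induced_map N (\<Sum>(a,b)\<leftarrow>ps. tens a b) F \<in> S" using Cons(1) pS by blast
    ultimately show ?case unfolding eq induced_map_add induced_map_tens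
      using assms(1) unfolding subsp_def by blast
  qed
  then show ?thesis using ps by simp
qed

lemma induced_map_F_add: "induced_map N T (F + G) = induced_map N T F + induced_map N T G"
  by (simp add: induced_map_def fun_eq_iff distrib_right sum.distrib)
lemma induced_map_F_smult: "induced_map N T (msmult c F) = msmult c (induced_map N T F)"
  by (simp add: induced_map_def fun_eq_iff sum_distrib_left mult.assoc)
lemma induced_map_F_zero: "induced_map N T 0 = 0"
  by (simp add: induced_map_def fun_eq_iff)

lemma subsp_range_induced: "subsp (range (induced_map N T))"
  unfolding subsp_def
proof (intro conjI ballI allI)
  show "0 \<in> range (induced_map N T)" using induced_map_F_zero by (metis rangeI)
next
  fix a b assume "a \<in> range (induced_map N T)" "b \<in> range (induced_map N T)"
  then obtain F G where "a = induced_map N T F" "b = induced_map N T G" by blast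
  then have "a + b = induced_map N T (F + G)" by (simp add: induced_map_F_add)
  then show "a + b \<in> range (induced_map N T)" by simp
next
  fix x a assume "a \<in> range (induced_map N T)"
  then obtain F where "a = induced_map N T F" by blast
  then have "msmult x a = induced_map N T (msmult x F)" by (simp add: induced_map_F_smult)
  then show "msmult x a \<in> range (induced_map N T)" by simp
qed

lemma induced_map_E: "a \<in> {1..N} \<Longrightarrow> b \<in> {1..N} \<Longrightarrow> induced_map N T (E a b) = (\<lambda>k l. T a b k l)"
proof (rule ext, rule ext)
  fix k l assume ab: "a \<in> {1..N}" "b \<in> {1..N}"
  have "\<And>i. (\<Sum>j\<in>{1..N}. E a b i j * T i j k l) = (if i = a then T a b k l else 0)"
  proof -
    fix i
    have "(\<Sum>j\<in>{1..N}. E a b i j * T i j k l) = (\<Sum>j\<in>{1..N}. if j = b then (if i = a then T a b k l else 0) else 0)"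
      by (rule sum.cong[OF refl]) (simp add: E_apply)
    also have "\<dots> = (if i = a then T a b k l else 0)" using ab(2) by (simp only: sum.delta finite_atLeastAtMost) simp
    finally show "(\<Sum>j\<in>{1..N}. E a b i j * T i j k l) = (if i = a then T a b k l else 0)" .
  qed
  then have "induced_map N T (E a b) k l = (\<Sum>i\<in>{1..N}. if i = a then T a b k l else 0)"
    unfolding induced_map_def by simp
  also have "\<dots> = T a b k l" using ab(1) by (simp only: sum.delta finite_atLeastAtMost) simp
  finally show "induced_map N T (E a b) k l = T a b k l" .
qed

lemma sum_swap4:
  fixes f :: "nat \<Rightarrow> nat \<Rightarrow> nat \<Rightarrow> nat \<Rightarrow> complex"
  shows "(\<Sum>k\<in>A. \<Sum>l\<in>A. \<Sum>i\<in>A. \<Sum>j\<in>A. f i j k l) = (\<Sum>i\<in>A. \<Sum>j\<in>A. \<Sum>k\<in>A. \<Sum>l\<in>A. f i j k l)"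
proof -
  have "(\<Sum>k\<in>A. \<Sum>l\<in>A. \<Sum>i\<in>A. \<Sum>j\<in>A. f i j k l) = (\<Sum>k\<in>A. \<Sum>i\<in>A. \<Sum>l\<in>A. \<Sum>j\<in>A. f i j k l)"
    by (rule sum.cong[OF refl], rule sum.swap)
  also have "\<dots> = (\<Sum>i\<in>A. \<Sum>k\<in>A. \<Sum>l\<in>A. \<Sum>j\<in>A. f i j k l)"
    by (rule sum.swap)
  also have "\<dots> = (\<Sum>i\<in>A. \<Sum>k\<in>A. \<Sum>j\<in>A. \<Sum>l\<in>A. f i j k l)"
    by (rule sum.cong[OF refl], rule sum.cong[OF refl], rule sum.swap)
  also have "\<dots> = (\<Sum>i\<in>A. \<Sum>j\<in>A. \<Sum>k\<in>A. \<Sum>l\<in>A. f i j k l)"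
    by (rule sum.cong[OF refl], rule sum.swap)
  finally show ?thesis .
qed

lemma induced_map_skew:
  assumes "skew T"
  shows "induced_map N T F i j = - (\<Sum>k\<in>{1..N}. \<Sum>l\<in>{1..N}. F k l * T i j k l)"
proof -
  have "induced_map N T F i j = (\<Sum>k\<in>{1..N}. \<Sum>l\<in>{1..N}. - (F k l * T i j k l))"
    unfolding induced_map_def
  proof (rule sum.cong[OF refl], rule sum.cong[OF refl])
    fix k l show "F k l * T k l i j = - (F k l * T i j k l)" using skewD[OF assms, of k l i j] by simp
  qed
  then show ?thesis by (simp add: sum_negf)
qed

lemma pairing_induced_skew:
  assumes "skew T"
  shows "pairing N F (induced_map N T G) = - pairing N G (induced_map N T F)"
proof -
  have "pairing N F (induced_map N T G) =
     (\<Sum>k\<in>{1..N}. \<Sum>l\<in>{1..N}. \<Sum>i\<in>{1..N}. \<Sum>j\<in>{1..N}. F k l * G i j * T i j k l)"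
    unfolding pairing_def induced_map_def
    by (rule sum.cong[OF refl], rule sum.cong[OF refl]) (simp add: sum_distrib_left mult.assoc)
  also have "\<dots> = (\<Sum>i\<in>{1..N}. \<Sum>j\<in>{1..N}. \<Sum>k\<in>{1..N}. \<Sum>l\<in>{1..N}. F k l * G i j * T i j k l)"
    by (rule sum_swap4)
  also have "\<dots> = - pairing N G (induced_map N T F)"
    unfolding pairing_def induced_map_skew[OF assms]
    by (simp add: sum_distrib_left mult.assoc mult.commute mult.left_commute flip: sum_negf)
  finally show ?thesis .
qed


lemma sum_single:
  assumes "finite A" "x \<in> A" "\<And>y. y \<in> A \<Longrightarrow> y \<noteq> x \<Longrightarrow> f y = 0"
  shows "sum f A = f x"
proof -
  have "sum f A = f x + sum f (A - {x})" using assms by (simp add: sum.remove)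
  also have "sum f (A - {x}) = 0" using assms by (intro sum.neutral) auto
  finally show ?thesis by simp
qed

lemma HP_apply: "HP N k a b = (if a = k \<and> b = k then 1 else 0) - (if a = b \<and> a \<in> {1..N} then 1 / of_nat N else 0)"
  by (simp add: HP_def E_apply Id_apply)

lemma sum_diagE_apply: "(\<Sum>m\<in>S. E m m) a b = (if a = b \<and> a \<in> S then 1 else 0)" if "finite S"
proof -
  have "(\<Sum>m\<in>S. E m m) a b = (\<Sum>m\<in>S. if m = a then (if a = b then 1 else 0) else 0)"
    unfolding sum_fun_apply E_apply by (rule sum.cong) auto
  also have "\<dots> = (if a = b \<and> a \<in> S then 1 else 0)" using that by (simp add: sum.delta)
  finally show ?thesis .
qed

lemma Hperp_apply: "Hperp N i a b = (if a = b \<and> a \<in> {1..N} then (of_nat N - 2 * of_nat i) / of_nat N else 0)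
   - (if a = b \<and> i+1 \<le> a \<and> a \<le> N-i then 1 else 0)"
  unfolding Hperp_def by (simp add: Id_apply sum_diagE_apply)

context rset
begin

abbreviation "n1 \<equiv> (N+1) div 2 - 1"

lemma n1_eq: "n1 = N - zz - 1" using zz_facts by simp

definition T1 :: ctens where
  "T1 a b k l = (\<Sum>k'\<in>{0..<zz}. nu (k'+1) * (HP N (k'+1) a b * E (k'+1) (N-k') k l - E (k'+1) (N-k') a b * HP N (k'+1) k l))"
definition T2 :: ctens where
  "T2 a b k l = (\<Sum>k'\<in>{0..<zz}. nu (k'+1) * (\<Sum>s\<in>{k'+2..N-k'-1}. E (k'+1) s a b * E s (N-k') k l - E s (N-k') a b * E (k'+1) s k l))"
definition T3 :: ctens where
  "T3 a b k l = (\<Sum>i\<in>{1..n1}. rho i * (Hperp N i a b * E i (N-i) k l - E i (N-i) a b * Hperp N i k l))"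

abbreviation "rr \<equiv> r_tensor N nu rho"

lemma r_apply: "rr a b k l = T1 a b k l + T2 a b k l + T3 a b k l"
  unfolding r_tensor_def T1_def T2_def T3_def zz_def tsmult_def wedge_def tens_def
  by (simp add: sum_fun_apply distrib_left sum.distrib)

lemma zz_le: "2 * zz \<le> N" "N \<le> 2*zz+1" "1 \<le> zz" using zz_facts by auto

lemma slice1:
  assumes p: "1 \<le> p" "p \<le> zz" and s: "p+1 \<le> s" "s \<le> N-p"
  shows "rr s (N+1-p) k l = - nu p * E p s k l"
proof -
  note zz = zz_le
  have 1: "T1 s (N+1-p) k l = 0"
    unfolding T1_def using p s zz by (intro sum.neutral) (auto simp: HP_apply E_apply)
  have 3: "T3 s (N+1-p) k l = 0"
    unfolding T3_def using p s zz by (intro sum.neutral) (auto simp: Hperp_apply E_apply)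
  have 2: "T2 s (N+1-p) k l = - nu p * E p s k l"
  proof -
    have "T2 s (N+1-p) k l = nu (p-1+1) * (\<Sum>s'\<in>{p-1+2..N-(p-1)-1}. E (p-1+1) s' s (N+1-p) * E s' (N-(p-1)) k l - E s' (N-(p-1)) s (N+1-p) * E (p-1+1) s' k l)"
      unfolding T2_def
    proof (rule sum_single)
      fix k' assume k': "k' \<in> {0..<zz}" "k' \<noteq> p-1"
      show "nu (k'+1) * (\<Sum>s'\<in>{k'+2..N-k'-1}. E (k'+1) s' s (N+1-p) * E s' (N-k') k l - E s' (N-k') s (N+1-p) * E (k'+1) s' k l) = 0"
        using k' p s zz by (auto simp: E_apply intro!: sum.neutral)
    qed (use p in auto)
    also have "\<dots> = nu p * (\<Sum>s'\<in>{p+1..N-p}. E p s' s (N+1-p) * E s' (N+1-p) k l - E s' (N+1-p) s (N+1-p) * E p s' k l)"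
      using p zz by (simp add: Suc_diff_le)
    also have "(\<Sum>s'\<in>{p+1..N-p}. E p s' s (N+1-p) * E s' (N+1-p) k l - E s' (N+1-p) s (N+1-p) * E p s' k l)
        = E p s s (N+1-p) * E s (N+1-p) k l - E s (N+1-p) s (N+1-p) * E p s k l"
      by (rule sum_single) (use p s zz in \<open>auto simp: E_apply\<close>)
    also have "\<dots> = - E p s k l" using p s by (simp add: E_apply)
    finally show ?thesis by simp
  qed
  show ?thesis unfolding r_apply 1 2 3 by simp
qed

lemma n1_le: "i \<le> n1 \<Longrightarrow> 2*i+1 \<le> N \<and> i \<le> zz"
  using zz_facts by auto

lemma slice2:
  assumes p: "1 \<le> p" "p \<le> zz" and s: "p+1 \<le> s" "s \<le> N-p-1"
  shows "rr p s k l = nu p * E s (N+1-p) k l"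
proof -
  note zz = zz_le
  have 1: "T1 p s k l = 0"
    unfolding T1_def using p s zz by (intro sum.neutral) (auto simp: HP_apply E_apply)
  have 3: "T3 p s k l = 0"
    unfolding T3_def using p s zz by (intro sum.neutral) (auto simp: Hperp_apply E_apply)
  have 2: "T2 p s k l = nu p * E s (N+1-p) k l"
  proof -
    have "T2 p s k l = nu (p-1+1) * (\<Sum>s'\<in>{p-1+2..N-(p-1)-1}. E (p-1+1) s' p s * E s' (N-(p-1)) k l - E s' (N-(p-1)) p s * E (p-1+1) s' k l)"
      unfolding T2_def
    proof (rule sum_single)
      fix k' assume k': "k' \<in> {0..<zz}" "k' \<noteq> p-1"
      show "nu (k'+1) * (\<Sum>s'\<in>{k'+2..N-k'-1}. E (k'+1) s' p s * E s' (N-k') k l - E s' (N-k') p s * E (k'+1) s' k l) = 0"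
        using k' p s zz by (auto simp: E_apply intro!: sum.neutral)
    qed (use p in auto)
    also have "\<dots> = nu p * (\<Sum>s'\<in>{p+1..N-p}. E p s' p s * E s' (N+1-p) k l - E s' (N+1-p) p s * E p s' k l)"
      using p zz by (simp add: Suc_diff_le)
    also have "(\<Sum>s'\<in>{p+1..N-p}. E p s' p s * E s' (N+1-p) k l - E s' (N+1-p) p s * E p s' k l)
        = E p s p s * E s (N+1-p) k l - E s (N+1-p) p s * E p s k l"
      by (rule sum_single) (use p s zz in \<open>auto simp: E_apply\<close>)
    also have "\<dots> = E s (N+1-p) k l" using p s by (simp add: E_apply)
    finally show ?thesis by simp
  qed
  show ?thesis unfolding r_apply 1 2 3 by simp
qed

lemma slice3:
  assumes p: "1 \<le> p" "p \<le> zz"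
  shows "rr p (N+1-p) k l = - nu p * HP N p k l"
proof -
  note zz = zz_le
  have 2: "T2 p (N+1-p) k l = 0"
    unfolding T2_def using p zz by (intro sum.neutral) (auto simp: E_apply intro!: sum.neutral)
  have 3: "T3 p (N+1-p) k l = 0"
    unfolding T3_def using p zz by (intro sum.neutral) (auto simp: Hperp_apply E_apply)
  have 1: "T1 p (N+1-p) k l = - nu p * HP N p k l"
  proof -
    have "T1 p (N+1-p) k l = nu (p-1+1) * (HP N (p-1+1) p (N+1-p) * E (p-1+1) (N-(p-1)) k l - E (p-1+1) (N-(p-1)) p (N+1-p) * HP N (p-1+1) k l)"
      unfolding T1_def
    proof (rule sum_single)
      fix k' assume k': "k' \<in> {0..<zz}" "k' \<noteq> p-1"
      show "nu (k'+1) * (HP N (k'+1) p (N+1-p) * E (k'+1) (N-k') k l - E (k'+1) (N-k') p (N+1-p) * HP N (k'+1) k l) = 0"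
        using k' p zz by (auto simp: E_apply HP_apply)
    qed (use p in auto)
    also have "\<dots> = - nu p * HP N p k l"
    proof -
      have "p \<noteq> Suc (N - p)" using p zz by arith
      then show ?thesis using p zz by (simp add: Suc_diff_le E_apply HP_apply algebra_simps)
    qed
    finally show ?thesis .
  qed
  show ?thesis unfolding r_apply 1 2 3 by simp
qed

lemma slice4:
  assumes i: "1 \<le> i" "i \<le> n1"
  shows "rr i (N-i) k l = nu i * E (N-i) (N+1-i) k l - rho i * Hperp N i k l"
proof -
  note zz = zz_le
  have ii: "2*i+1 \<le> N" "i \<le> zz" using n1_le[OF i(2)] by auto
  have 1: "T1 i (N-i) k l = 0"
    unfolding T1_def using i ii zz by (intro sum.neutral) (auto simp: HP_apply E_apply)
  have 3: "T3 i (N-i) k l = - rho i * Hperp N i k l"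
  proof -
    have "T3 i (N-i) k l = rho i * (Hperp N i i (N-i) * E i (N-i) k l - E i (N-i) i (N-i) * Hperp N i k l)"
      unfolding T3_def
    proof (rule sum_single)
      fix i' assume "i' \<in> {1..n1}" "i' \<noteq> i"
      then show "rho i' * (Hperp N i' i (N-i) * E i' (N-i') k l - E i' (N-i') i (N-i) * Hperp N i' k l) = 0"
        using i ii by (auto simp: E_apply Hperp_apply)
    qed (use i in auto)
    also have "\<dots> = - rho i * Hperp N i k l"
    proof -
      have "i \<noteq> N - i" using ii by arith
      then show ?thesis using ii by (simp add: E_apply Hperp_apply algebra_simps)
    qed
    finally show ?thesis .
  qed
  have 2: "T2 i (N-i) k l = nu i * E (N-i) (N+1-i) k l"
  proof -
    have "T2 i (N-i) k l = nu (i-1+1) * (\<Sum>s'\<in>{i-1+2..N-(i-1)-1}. E (i-1+1) s' i (N-i) * E s' (N-(i-1)) k l - E s' (N-(i-1)) i (N-i) * E (i-1+1) s' k l)"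
      unfolding T2_def
    proof (rule sum_single)
      fix k' assume k': "k' \<in> {0..<zz}" "k' \<noteq> i-1"
      show "nu (k'+1) * (\<Sum>s'\<in>{k'+2..N-k'-1}. E (k'+1) s' i (N-i) * E s' (N-k') k l - E s' (N-k') i (N-i) * E (k'+1) s' k l) = 0"
        using k' i ii zz by (auto simp: E_apply intro!: sum.neutral)
    qed (use i ii in auto)
    also have "\<dots> = nu i * (\<Sum>s'\<in>{i+1..N-i}. E i s' i (N-i) * E s' (N+1-i) k l - E s' (N+1-i) i (N-i) * E i s' k l)"
      using i ii by (simp add: Suc_diff_le)
    also have "(\<Sum>s'\<in>{i+1..N-i}. E i s' i (N-i) * E s' (N+1-i) k l - E s' (N+1-i) i (N-i) * E i s' k l)
        = E i (N-i) i (N-i) * E (N-i) (N+1-i) k l - E (N-i) (N+1-i) i (N-i) * E i (N-i) k l"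
      by (rule sum_single) (use i ii in \<open>auto simp: E_apply\<close>)
    also have "\<dots> = E (N-i) (N+1-i) k l"
    proof -
      have "i \<noteq> N - i" using ii by arith
      then show ?thesis using ii by (simp add: E_apply)
    qed
    finally show ?thesis by simp
  qed
  show ?thesis unfolding r_apply 1 2 3 by simp
qed

lemma slice5:
  assumes p: "1 \<le> p" "p \<le> zz"
  shows "rr p p k l - rr N N k l = nu p * E p (N+1-p) k l - (\<Sum>i\<in>{1..n1}. if i < p then rho i * E i (N-i) k l else 0)"
proof -
  note zz = zz_le
  have 2: "T2 p p k l = 0" "T2 N N k l = 0"
    unfolding T2_def using p zz by (auto simp: E_apply intro!: sum.neutral)
  have 1: "T1 p p k l - T1 N N k l = nu p * E p (N+1-p) k l"
  proof -
    have "T1 p p k l - T1 N N k l = (\<Sum>k'\<in>{0..<zz}. nu (k'+1) * (HP N (k'+1) p p * E (k'+1) (N-k') k l - E (k'+1) (N-k') p p * HP N (k'+1) k l)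
       - nu (k'+1) * (HP N (k'+1) N N * E (k'+1) (N-k') k l - E (k'+1) (N-k') N N * HP N (k'+1) k l))"
      unfolding T1_def by (simp add: sum_subtractf)
    also have "\<dots> = nu (p-1+1) * (HP N (p-1+1) p p * E (p-1+1) (N-(p-1)) k l - E (p-1+1) (N-(p-1)) p p * HP N (p-1+1) k l)
       - nu (p-1+1) * (HP N (p-1+1) N N * E (p-1+1) (N-(p-1)) k l - E (p-1+1) (N-(p-1)) N N * HP N (p-1+1) k l)"
    proof (rule sum_single)
      fix k' assume k': "k' \<in> {0..<zz}" "k' \<noteq> p-1"
      show "nu (k'+1) * (HP N (k'+1) p p * E (k'+1) (N-k') k l - E (k'+1) (N-k') p p * HP N (k'+1) k l)
       - nu (k'+1) * (HP N (k'+1) N N * E (k'+1) (N-k') k l - E (k'+1) (N-k') N N * HP N (k'+1) k l) = 0"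
        using k' p zz by (auto simp: E_apply HP_apply algebra_simps)
    qed (use p in auto)
    also have "\<dots> = nu p * E p (N+1-p) k l"
    proof -
      have "p \<noteq> Suc (N - p)" "p \<noteq> N" using p zz by arith+
      then show ?thesis using p zz by (simp add: Suc_diff_le E_apply HP_apply algebra_simps)
    qed
    finally show ?thesis .
  qed
  have 3: "T3 p p k l - T3 N N k l = - (\<Sum>i\<in>{1..n1}. if i < p then rho i * E i (N-i) k l else 0)"
  proof -
    have "T3 p p k l - T3 N N k l = (\<Sum>i\<in>{1..n1}. rho i * (Hperp N i p p * E i (N-i) k l - E i (N-i) p p * Hperp N i k l)
       - rho i * (Hperp N i N N * E i (N-i) k l - E i (N-i) N N * Hperp N i k l))"
      unfolding T3_def by (simp add: sum_subtractf)
    also have "\<dots> = (\<Sum>i\<in>{1..n1}. - (if i < p then rho i * E i (N-i) k l else 0))"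
    proof (rule sum.cong[OF refl])
      fix i assume i: "i \<in> {1..n1}"
      then have ii: "2*i+1 \<le> N" "i \<le> zz" using n1_le by auto
      show "rho i * (Hperp N i p p * E i (N-i) k l - E i (N-i) p p * Hperp N i k l)
       - rho i * (Hperp N i N N * E i (N-i) k l - E i (N-i) N N * Hperp N i k l) = - (if i < p then rho i * E i (N-i) k l else 0)"
        using i ii p zz by (auto simp: E_apply Hperp_apply algebra_simps)
    qed
    finally show ?thesis by (simp add: sum_negf)
  qed
  show ?thesis unfolding r_apply using 1 2 3 by (simp add: algebra_simps)
qed

end

context rset
begin

definition WW :: "cmat set" where "WW = range (induced_map N rr)"

lemma WW_subsp: "subsp WW" unfolding WW_def by (rule subsp_range_induced)

lemma slice_in: "a \<in> {1..N} \<Longrightarrow> b \<in> {1..N} \<Longrightarrow> (\<lambda>k l. rr a b k l) \<in> WW"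
  unfolding WW_def by (metis induced_map_E rangeI)

lemma WW_smult: "x \<in> WW \<Longrightarrow> msmult c x \<in> WW"
  using WW_subsp by (simp add: subsp_def)
lemma WW_add: "x \<in> WW \<Longrightarrow> y \<in> WW \<Longrightarrow> x + y \<in> WW"
  using WW_subsp by (simp add: subsp_def)
lemma WW_diff: "x \<in> WW \<Longrightarrow> y \<in> WW \<Longrightarrow> x - y \<in> WW"
  using WW_subsp by (rule subsp_diff)
lemma WW_zero: "0 \<in> WW"
  using WW_subsp by (simp add: subsp_def)

lemma nu_nz': "1 \<le> p \<Longrightarrow> p \<le> zz \<Longrightarrow> nu p \<noteq> 0"
  using nu_nz by (auto simp: zz_def)
lemma rho_nz': "1 \<le> i \<Longrightarrow> i \<le> n1 \<Longrightarrow> rho i \<noteq> 0"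
  using rho_nz by auto

lemma EW1: assumes p: "1 \<le> p" "p \<le> zz" and s: "p+1 \<le> s" "s \<le> N-p"
  shows "E p s \<in> WW"
proof -
  have eq: "E p s = msmult (- 1 / nu p) (\<lambda>k l. rr s (N+1-p) k l)"
  proof (rule ext, rule ext)
    fix k l show "E p s k l = msmult (- 1 / nu p) (\<lambda>k l. rr s (N+1-p) k l) k l"
      using nu_nz'[OF p] slice1[OF p s, of k l] by (simp add: field_simps)
  qed
  have mem: "(\<lambda>k l. rr s (N+1-p) k l) \<in> WW" using p s zz_le by (intro slice_in) auto
  show ?thesis unfolding eq by (rule WW_smult[OF mem])
qed

lemma EW2: assumes p: "1 \<le> p" "p \<le> zz" and s: "p+1 \<le> s" "s \<le> N-p-1"
  shows "E s (N+1-p) \<in> WW"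
proof -
  have eq: "E s (N+1-p) = msmult (1 / nu p) (\<lambda>k l. rr p s k l)"
  proof (rule ext, rule ext)
    fix k l show "E s (N+1-p) k l = msmult (1 / nu p) (\<lambda>k l. rr p s k l) k l"
      using nu_nz'[OF p] slice2[OF p s, of k l] by (simp add: field_simps)
  qed
  have mem: "(\<lambda>k l. rr p s k l) \<in> WW" using p s zz_le by (intro slice_in) auto
  show ?thesis unfolding eq by (rule WW_smult[OF mem])
qed

lemma EW5: assumes p: "1 \<le> p" "p \<le> zz"
  shows "E p (N+1-p) \<in> WW"
proof -
  let ?S = "(\<Sum>i\<in>{1..n1}. if i < p then msmult (rho i) (E i (N-i)) else 0)"
  have S: "?S k l = (\<Sum>i\<in>{1..n1}. if i < p then rho i * E i (N-i) k l else 0)" for k l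
    unfolding sum_fun_apply by (rule sum.cong) auto
  have "E p (N+1-p) = msmult (1 / nu p) ((\<lambda>k l. rr p p k l) - (\<lambda>k l. rr N N k l) + ?S)"
  proof (rule ext, rule ext)
    fix k l
    have "rr p p k l - rr N N k l + ?S k l = nu p * E p (N+1-p) k l"
      using slice5[OF p, of k l] S[of k l] by simp
    then show "E p (N+1-p) k l = msmult (1 / nu p) ((\<lambda>k l. rr p p k l) - (\<lambda>k l. rr N N k l) + ?S) k l"
      using nu_nz'[OF p] by (simp add: field_simps)
  qed
  moreover have "?S \<in> WW"
  proof (rule subsp_sum[OF WW_subsp])
    fix i assume i: "i \<in> {1..n1}"
    show "(if i < p then msmult (rho i) (E i (N-i)) else 0) \<in> WW"
    proof (cases "i < p")
      case True
      then have "E i (N-i) \<in> WW" using i p n1_le[of i] by (intro EW1) auto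
      then show ?thesis using True by (simp add: WW_smult)
    qed (simp add: WW_zero)
  qed
  moreover have "(\<lambda>k l. rr p p k l) \<in> WW" "(\<lambda>k l. rr N N k l) \<in> WW"
    using p zz_le by (auto intro!: slice_in)
  ultimately show ?thesis by (simp only:) (intro WW_smult WW_add WW_diff)
qed

definition Rg :: "(nat \<times> nat) set" where
  "Rg = {(a,b). 1 \<le> a \<and> a < b \<and> b \<le> N \<and> \<not> (cnd a \<and> b = Suc a)}"

lemma Rg_finite: "finite Rg"
proof -
  have "Rg \<subseteq> {1..N} \<times> {1..N}" by (auto simp: Rg_def)
  then show ?thesis by (rule finite_subset) simp
qed

lemma E_in_WW: assumes "(a,b) \<in> Rg" shows "E a b \<in> WW"
proof -
  note zz = zz_le
  have ab: "1 \<le> a" "a < b" "b \<le> N" "\<not> (cnd a \<and> b = Suc a)" using assms by (auto simp: Rg_def)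
  consider (c1) "a \<le> zz" "b \<le> N - a" | (c2) "a \<le> zz" "b = N + 1 - a" | (c3) "(a \<le> zz \<and> b \<ge> N + 2 - a) \<or> a \<ge> zz+1"
    by linarith
  then show ?thesis
  proof cases
    case c1 then show ?thesis using ab by (intro EW1) auto
  next
    case c2 then show ?thesis using ab EW5[of a] by auto
  next
    case c3
    have b2: "b \<ge> a + 2" if "a \<ge> zz + 1" using ab that by (auto simp: cnd_def)
    have "E a (N + 1 - (N + 1 - b)) \<in> WW"
      using c3 ab zz b2 by (intro EW2) auto
    moreover have "N + 1 - (N + 1 - b) = b" using ab by auto
    ultimately show ?thesis by simp
  qed
qed

end

context rset
begin

definition psi :: "cmat \<Rightarrow> cmat" where
  "psi h = (\<lambda>a b. h a b + (if cnd a \<and> b = Suc a then tt a * (h (Suc a) (Suc a) - h a a) else 0))"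

lemma psi_add: "psi (x + y) = psi x + psi y"
  by (simp add: psi_def fun_eq_iff algebra_simps)
lemma psi_diff: "psi (x - y) = psi x - psi y"
  by (simp add: psi_def fun_eq_iff algebra_simps)
lemma psi_uminus: "psi (- x) = - psi x"
  by (simp add: psi_def fun_eq_iff algebra_simps)
lemma psi_smult: "psi (msmult c x) = msmult c (psi x)"
  by (simp add: psi_def fun_eq_iff algebra_simps)
lemma psi_zero: "psi 0 = 0"
  by (simp add: psi_def fun_eq_iff)
lemma psi_sum: "psi (\<Sum>x\<in>S. f x) = (\<Sum>x\<in>S. psi (f x))"
  by (induct S rule: infinite_finite_induct) (simp_all only: sum.empty sum.infinite psi_zero sum.insert psi_add simp_thms)

lemma psi_HP_low: assumes "1 \<le> p" "p \<le> zz" shows "psi (HP N p) = HP N p"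
  using assms cnd_range by (auto simp: psi_def fun_eq_iff HP_apply cnd_def)

lemma HP_W: assumes p: "1 \<le> p" "p \<le> zz" shows "HP N p \<in> WW"
proof -
  have eq: "HP N p = msmult (- 1 / nu p) (\<lambda>k l. rr p (N+1-p) k l)"
  proof (rule ext, rule ext)
    fix k l show "HP N p k l = msmult (- 1 / nu p) (\<lambda>k l. rr p (N+1-p) k l) k l"
      using nu_nz'[OF p] slice3[OF p, of k l] by (simp add: field_simps)
  qed
  have mem: "(\<lambda>k l. rr p (N+1-p) k l) \<in> WW" using p zz_le by (intro slice_in) auto
  show ?thesis unfolding eq by (rule WW_smult[OF mem])
qed

lemma psi_Hperp_W: assumes i: "1 \<le> i" "i \<le> n1" shows "psi (Hperp N i) \<in> WW"
proof -
  have ii: "2*i+1 \<le> N" "i \<le> zz" using n1_le[OF i(2)] by auto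
  have eq: "psi (Hperp N i) = msmult (- 1 / rho i) (\<lambda>k l. rr i (N-i) k l)"
  proof (rule ext, rule ext)
    fix k l
    have t: "tt (N - i) = - nu i / rho i" using ii by (simp add: tt_def)
    have A: "psi (Hperp N i) k l = Hperp N i k l - nu i / rho i * E (N-i) (N+1-i) k l"
      using ii i zz_le cnd_range[of k] t
      by (auto simp: psi_def Hperp_apply cnd_def E_apply)
    have B: "rr i (N-i) k l = nu i * E (N-i) (N+1-i) k l - rho i * Hperp N i k l"
      by (rule slice4[OF i])
    have "psi (Hperp N i) k l = - rr i (N-i) k l / rho i"
      unfolding A B using rho_nz'[OF i] by (simp add: field_simps)
    then show "psi (Hperp N i) k l = msmult (- 1 / rho i) (\<lambda>k l. rr i (N-i) k l) k l"
      by simp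
  qed
  have mem: "(\<lambda>k l. rr i (N-i) k l) \<in> WW" using i ii by (intro slice_in) auto
  show ?thesis unfolding eq by (rule WW_smult[OF mem])
qed

lemma WW_uminus: "x \<in> WW \<Longrightarrow> - x \<in> WW"
proof -
  assume "x \<in> WW"
  then have "msmult (-1) x \<in> WW" by (rule WW_smult)
  moreover have "msmult (-1) x = - x" by (simp add: fun_eq_iff)
  ultimately show ?thesis by simp
qed

lemma N_pos: "(of_nat N :: complex) \<noteq> 0" using N3 by simp

lemma R2: "HP N N = Hperp N 1 - HP N 1"
  using N3 N_pos by (auto simp: fun_eq_iff HP_apply Hperp_apply field_simps)

lemma R3: assumes "1 \<le> i" "i + 1 \<le> n1"
  shows "HP N (N-i) = - (Hperp N i - Hperp N (i+1)) - HP N (i+1)"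
proof -
  have ii: "2*i+3 \<le> N" using assms zz_facts by auto
  show ?thesis
    using ii assms N_pos by (auto simp: fun_eq_iff HP_apply Hperp_apply field_simps)
qed

lemma R4o: assumes "N = 2*zz+1" shows "HP N (zz+1) = - Hperp N zz"
proof -
  have "(of_nat N :: complex) = of_nat (2*zz+1)" using assms by (rule arg_cong)
  then have c: "(of_nat N :: complex) = 2 * of_nat zz + 1" by simp
  show ?thesis using assms N_pos zz_le by (auto simp: fun_eq_iff HP_apply Hperp_apply field_simps c)
qed

lemma R4e: assumes "N = 2*zz" shows "HP N (zz+1) = - Hperp N (zz-1) - HP N zz"
proof -
  have "(of_nat N :: complex) = of_nat (2*zz)" using assms by (rule arg_cong)
  then have c: "(of_nat N :: complex) = 2 * of_nat zz" by simp
  have d: "(of_nat (zz - 1) :: complex) = of_nat zz - 1" using zz_le by (simp add: of_nat_diff)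
  show ?thesis using assms N_pos zz_le by (auto simp: fun_eq_iff HP_apply Hperp_apply field_simps c d)
qed

lemma MW_low: "1 \<le> p \<Longrightarrow> p \<le> zz \<Longrightarrow> psi (HP N p) \<in> WW"
  by (simp add: psi_HP_low HP_W)

lemma M_W: assumes a: "a \<in> {1..N}" shows "psi (HP N a) \<in> WW"
proof -
  note zz = zz_facts
  have n1: "1 \<le> n1" using N3 zz by auto
  have aN: "a \<le> N" using a by simp
  consider (low) "a \<le> zz" | (top) "a = N" | (mid) "zz + 2 \<le> a" "a \<le> N - 1" | (z1) "a = zz + 1"
    using aN by linarith
  then show ?thesis
  proof cases
    case low then show ?thesis using a by (intro MW_low) auto
  next
    case top
    show ?thesis unfolding top R2 psi_diff
      using n1 zz by (intro WW_diff psi_Hperp_W MW_low) auto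
  next
    case mid
    define i where "i = N - a"
    have i: "1 \<le> i" "i + 1 \<le> n1" "a = N - i" using mid zz unfolding i_def by auto
    show ?thesis unfolding i(3) R3[OF i(1,2)] psi_diff psi_uminus
      using i zz n1_le[of "i+1"] by (intro WW_diff WW_uminus psi_Hperp_W MW_low) auto
  next
    case z1
    show ?thesis
    proof (cases "N = 2*zz+1")
      case True
      show ?thesis unfolding z1 R4o[OF True] psi_uminus
        using True zz by (intro WW_uminus psi_Hperp_W) auto
    next
      case False
      then have e: "N = 2*zz" using zz by auto
      have "2 \<le> zz" using e N3 by auto
      then show ?thesis unfolding z1 R4e[OF e] psi_diff psi_uminus
        using e zz by (intro WW_diff WW_uminus psi_Hperp_W MW_low) auto
    qed
  qed
qed

lemma cset_gl: "y \<in> cset \<Longrightarrow> y \<in> gl N"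
  by (simp add: cset_def ut_def)

lemma sumHP: assumes y: "y \<in> gl N" "mtrace N y = 0"
  shows "(\<Sum>a\<in>{1..N}. msmult (y a a) (HP N a)) = (\<lambda>i j. if i = j then y i i else 0)"
proof (rule ext, rule ext)
  fix i j
  have "(\<Sum>a\<in>{1..N}. msmult (y a a) (HP N a)) i j
      = (\<Sum>a\<in>{1..N}. (if a = i then (if i = j then y i i else 0) else 0) - y a a * (if i = j \<and> i \<in> {1..N} then 1 / of_nat N else 0))"
    unfolding sum_fun_apply by (rule sum.cong) (auto simp: HP_apply algebra_simps)
  also have "\<dots> = (if i \<in> {1..N} \<and> i = j then y i i else 0) - (\<Sum>a\<in>{1..N}. y a a) * (if i = j \<and> i \<in> {1..N} then 1 / of_nat N else 0)"
    by (simp add: sum_subtractf sum.delta sum_distrib_right)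
  also have "\<dots> = (if i = j then y i i else 0)"
    using y by (auto simp: mtrace_def gl_iff)
  finally show "(\<Sum>a\<in>{1..N}. msmult (y a a) (HP N a)) i j = (if i = j then y i i else 0)" .
qed

lemma decomp: assumes y: "y \<in> cset"
  shows "y = (\<Sum>x\<in>Rg. msmult (y (fst x) (snd x)) (E (fst x) (snd x))) + psi (\<lambda>i j. if i = j then y i i else 0)"
proof (rule ext, rule ext)
  fix k l
  have s: "(\<Sum>x\<in>Rg. msmult (y (fst x) (snd x)) (E (fst x) (snd x))) k l = (if (k,l) \<in> Rg then y k l else 0)"
  proof -
    have "(\<Sum>x\<in>Rg. msmult (y (fst x) (snd x)) (E (fst x) (snd x))) k l = (\<Sum>x\<in>Rg. if x = (k,l) then y k l else 0)"
      unfolding sum_fun_apply by (rule sum.cong) (auto simp: E_apply)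
    also have "\<dots> = (if (k,l) \<in> Rg then y k l else 0)" using Rg_finite by (simp add: sum.delta)
    finally show ?thesis .
  qed
  have yc: "ut N y" "\<And>j. cnd j \<Longrightarrow> y j (Suc j) = tt j * (y (Suc j) (Suc j) - y j j)"
    using y by (auto simp: cset_def)
  have "y k l = (if (k,l) \<in> Rg then y k l else 0) + ((if k = l then y k k else 0) + (if cnd k \<and> l = Suc k then tt k * (y (Suc k) (Suc k) - y k k) else 0))"
  proof (cases "(k,l) \<in> Rg")
    case True then show ?thesis by (auto simp: Rg_def)
  next
    case False
    show ?thesis
    proof (cases "k = l")
      case True then show ?thesis using False cnd_range[of k] by (auto simp: Rg_def)
    next
      case kl: False
      show ?thesis
      proof (cases "cnd k \<and> l = Suc k")
        case True then show ?thesis using False yc(2)[of k] by auto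
      next
        case c: False
        have "y k l = 0"
        proof (cases "l < k")
          case True then show ?thesis using yc(1) by (simp add: ut_lowD)
        next
          case lk: False
          then have "\<not> (k \<in> {1..N} \<and> l \<in> {1..N})" using False kl c by (auto simp: Rg_def)
          then show ?thesis using yc(1) by (auto simp: ut_glD)
        qed
        then show ?thesis using False kl c by auto
      qed
    qed
  qed
  moreover have e2: "psi (\<lambda>i j. if i = j then y i i else 0) k l = (if k = l then y k k else 0) + (if cnd k \<and> l = Suc k then tt k * (y (Suc k) (Suc k) - y k k) else 0)"
    by (simp add: psi_def)
  ultimately show "y k l = ((\<Sum>x\<in>Rg. msmult (y (fst x) (snd x)) (E (fst x) (snd x))) + psi (\<lambda>i j. if i = j then y i i else 0)) k l"
    unfolding plus_fun_apply s e2 by blast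
qed

lemma cset_sub_WW: "cset \<subseteq> WW"
proof
  fix y assume y: "y \<in> cset"
  have tr: "mtrace N y = 0" using y by (simp add: cset_def)
  have 1: "(\<Sum>x\<in>Rg. msmult (y (fst x) (snd x)) (E (fst x) (snd x))) \<in> WW"
  proof (rule subsp_sum[OF WW_subsp])
    fix x assume "x \<in> Rg"
    then have "E (fst x) (snd x) \<in> WW" by (intro E_in_WW) simp
    then show "msmult (y (fst x) (snd x)) (E (fst x) (snd x)) \<in> WW" by (rule WW_smult)
  qed
  have 2: "psi (\<lambda>i j. if i = j then y i i else 0) \<in> WW"
    unfolding sumHP[OF cset_gl[OF y] tr, symmetric] psi_sum psi_smult
    by (intro subsp_sum[OF WW_subsp] WW_smult M_W)
  show "y \<in> WW" by (subst decomp[OF y]) (rule WW_add[OF 1 2])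
qed

end

lemma ut_add: "ut N A \<Longrightarrow> ut N B \<Longrightarrow> ut N (A + B)"
  by (simp add: ut_def gl_iff)
lemma ut_diff: "ut N A \<Longrightarrow> ut N B \<Longrightarrow> ut N (A - B)"
  by (simp add: ut_def gl_iff)
lemma ut_smult: "ut N A \<Longrightarrow> ut N (msmult c A)"
  by (simp add: ut_def gl_iff)
lemma mtrace_add: "mtrace N (A + B) = mtrace N A + mtrace N B"
  by (simp add: mtrace_def sum.distrib)
lemma mtrace_diff: "mtrace N (A - B) = mtrace N A - mtrace N B"
  by (simp add: mtrace_def sum_subtractf)
lemma mtrace_smult: "mtrace N (msmult c A) = c * mtrace N A"
  by (simp add: mtrace_def sum_distrib_left)

context rset
begin

lemma cset_add: assumes A: "a \<in> cset" "b \<in> cset" shows "a + b \<in> cset"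
proof -
  have u: "ut N (a + b)" using A by (auto simp: cset_def ut_add)
  have t: "mtrace N (a + b) = 0" using A by (auto simp: cset_def mtrace_add)
  have c: "(a + b) j (Suc j) = tt j * ((a + b) (Suc j) (Suc j) - (a + b) j j)" if "cnd j" for j
  proof -
    have h1: "a j (Suc j) = tt j * (a (Suc j) (Suc j) - a j j)" and h2: "b j (Suc j) = tt j * (b (Suc j) (Suc j) - b j j)"
      using A that by (auto simp: cset_def)
    show ?thesis by (simp only: plus_fun_apply h1 h2) (simp add: algebra_simps)
  qed
  show ?thesis using u t c by (simp add: cset_def)
qed

lemma cset_smult: assumes A: "a \<in> cset" shows "msmult x a \<in> cset"
proof -
  have u: "ut N (msmult x a)" using A by (auto simp: cset_def ut_smult)
  have t: "mtrace N (msmult x a) = 0" using A by (auto simp: cset_def mtrace_smult)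
  have c: "msmult x a j (Suc j) = tt j * (msmult x a (Suc j) (Suc j) - msmult x a j j)" if "cnd j" for j
  proof -
    have h1: "a j (Suc j) = tt j * (a (Suc j) (Suc j) - a j j)"
      using A that by (auto simp: cset_def)
    show ?thesis by (simp only: msmult_apply h1) (simp add: algebra_simps)
  qed
  show ?thesis using u t c by (simp add: cset_def)
qed

lemma cset_zero: "0 \<in> cset"
  by (simp add: cset_def ut_def gl_iff mtrace_def)

lemma cset_subsp: "subsp cset"
  unfolding subsp_def using cset_add cset_smult cset_zero by blast

lemma galg_bracket: assumes "A \<in> galg N" "B \<in> galg N" shows "bracket N A B \<in> galg N"
proof -
  have a: "ut N A" "\<And>j. cnd j \<Longrightarrow> A j (Suc j) = 0" and b: "ut N B" "\<And>j. cnd j \<Longrightarrow> B j (Suc j) = 0"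
    using assms by (auto simp: galg_iff)
  have u: "ut N (bracket N A B)" unfolding bracket_def by (intro ut_diff ut_mult a b)
  have d: "bracket N A B i i = 0" for i
    unfolding bracket_def by (simp add: ut_mult_diag a b)
  have s: "bracket N A B j (Suc j) = 0" if "cnd j" for j
    unfolding bracket_def using that by (simp add: ut_mult_sup a b)
  show ?thesis using u d s by (auto simp: galg_iff mtrace_def)
qed

lemma cset_lie: "lie_subalgebra N cset"
proof -
  have sub: "cset \<subseteq> sl N" by (auto simp: cset_def sl_def ut_def)
  have br: "bracket N a b \<in> cset" if "a \<in> cset" "b \<in> cset" for a b
  proof -
    have "a \<in> phi ` galg N" "b \<in> phi ` galg N" using that image_phi by auto
    then obtain a' b' where ab: "a' \<in> galg N" "b' \<in> galg N" "a = phi a'" "b = phi b'"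
      by blast
    have "bracket N a b = phi (bracket N a' b')"
      using ab by (simp add: phi_bracket galg_gl)
    moreover have "phi (bracket N a' b') \<in> phi ` galg N" using ab galg_bracket by blast
    ultimately show ?thesis using image_phi by simp
  qed
  show ?thesis using cset_subsp sub br unfolding lie_subalgebra_def subsp_def by blast
qed

lemma skew_rr: "skew rr"
  unfolding r_tensor_def
  by (intro skew_add skew_sum skew_tsmult skew_wedge)

lemma psi_cset: assumes h: "h \<in> gl N" "\<And>a b. a \<noteq> b \<Longrightarrow> h a b = 0" "mtrace N h = 0"
  shows "psi h \<in> cset"
proof -
  have u: "ut N (psi h)" using h cnd_range by (auto simp: ut_def gl_iff psi_def)
  have d: "psi h i i = h i i" for i by (simp add: psi_def)
  have tr: "mtrace N (psi h) = 0" using h(3) by (simp add: mtrace_def d)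
  show ?thesis using u tr h(2) by (auto simp: cset_def d psi_def)
qed

lemma mtrace_HP: "p \<in> {1..N} \<Longrightarrow> mtrace N (HP N p) = 0"
  unfolding mtrace_def HP_apply using N_pos
  by (simp add: sum_subtractf sum.delta)

lemma mtrace_Hperp: assumes "2*i \<le> N" shows "mtrace N (Hperp N i) = 0"
proof -
  have "(\<Sum>a\<in>{1..N}. (if i+1 \<le> a \<and> a \<le> N-i then 1 else 0 :: complex)) = of_nat (card {i+1..N-i})"
  proof -
    have e: "{a\<in>{1..N}. i+1 \<le> a \<and> a \<le> N-i} = {i+1..N-i}" by auto
    have "(\<Sum>a\<in>{1..N}. (if i+1 \<le> a \<and> a \<le> N-i then 1 else 0 :: complex)) = (\<Sum>a\<in>{a\<in>{1..N}. i+1 \<le> a \<and> a \<le> N-i}. 1)"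
      by (simp only: sum.inter_filter[OF finite_atLeastAtMost])
    also have "\<dots> = (\<Sum>a\<in>{i+1..N-i}. 1)" by (simp only: e)
    finally show ?thesis by simp
  qed
  moreover have "card {i+1..N-i} = N - 2*i" by simp
  moreover have "(of_nat (N - 2*i) :: complex) = of_nat N - 2 * of_nat i" using assms by (simp add: of_nat_diff)
  ultimately show ?thesis
    unfolding mtrace_def Hperp_apply using N_pos
    by (simp add: sum_subtractf)
qed

lemma HP_cset: assumes "1 \<le> p" "p \<le> zz" shows "HP N p \<in> cset"
proof -
  have "psi (HP N p) \<in> cset"
    using assms zz_le by (intro psi_cset mtrace_HP) (auto simp: gl_iff HP_apply)
  then show ?thesis using psi_HP_low[OF assms] by simp
qed

lemma E_cset: assumes "(a,b) \<in> Rg" shows "E a b \<in> cset"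
proof -
  have ab: "1 \<le> a" "a < b" "b \<le> N" "\<not> (cnd a \<and> b = Suc a)" using assms by (auto simp: Rg_def)
  have tr: "mtrace N (E a b) = 0" using ab unfolding mtrace_def E_apply by (intro sum.neutral) auto
  show ?thesis using ab tr by (auto simp: cset_def ut_def gl_iff E_apply)
qed

definition Dp :: "nat \<Rightarrow> cmat" where
  "Dp i = msmult (nu i) (E (N-i) (N+1-i)) - msmult (rho i) (Hperp N i)"

lemma Dp_cset: assumes i: "1 \<le> i" "i \<le> n1" shows "Dp i \<in> cset"
proof -
  have ii: "2*i+1 \<le> N" "i \<le> zz" using n1_le[OF i(2)] by auto
  have t: "tt (N - i) = - nu i / rho i" using ii by (simp add: tt_def)
  have eq: "Dp i = msmult (- rho i) (psi (Hperp N i))"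
  proof (rule ext, rule ext)
    fix k l
    have A: "psi (Hperp N i) k l = Hperp N i k l - nu i / rho i * E (N-i) (N+1-i) k l"
      using ii i zz_le cnd_range[of k] t
      by (auto simp: psi_def Hperp_apply cnd_def E_apply)
    show "Dp i k l = msmult (- rho i) (psi (Hperp N i)) k l"
      unfolding msmult_apply A using rho_nz'[OF i] by (simp add: Dp_def field_simps)
  qed
  have "psi (Hperp N i) \<in> cset"
    using ii by (intro psi_cset mtrace_Hperp) (auto simp: gl_iff Hperp_apply)
  then show ?thesis unfolding eq by (rule cset_smult)
qed

end

lemma tsmult_add: "tsmult c (X + Y) = tsmult c X + tsmult c Y"
  by (simp add: tsmult_def fun_eq_iff distrib_left)
lemma tsmult_zero: "tsmult c 0 = 0"
  by (simp add: tsmult_def fun_eq_iff)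

context rset
begin

definition Ak :: "nat \<Rightarrow> ctens" where "Ak k = wedge (HP N (k+1)) (E (k+1) (N-k))"
definition Bk :: "nat \<Rightarrow> ctens" where "Bk k = (\<Sum>s\<in>{k+2..N-k-1}. wedge (E (k+1) s) (E s (N-k)))"
definition Bk' :: "nat \<Rightarrow> ctens" where "Bk' k = (\<Sum>s\<in>{k+2..N-k-2}. wedge (E (k+1) s) (E s (N-k)))"
definition Ck :: "nat \<Rightarrow> ctens" where "Ck k = wedge (E (k+1) (N-k-1)) (E (N-k-1) (N-k))"

lemma rr_eq0: "rr = (\<Sum>k\<in>{0..<zz}. tsmult (nu (k+1)) (Ak k + Bk k))
   + (\<Sum>i\<in>{1..n1}. tsmult (rho i) (wedge (Hperp N i) (E i (N-i))))"
  unfolding r_tensor_def Ak_def Bk_def zz_def by simp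

lemma Bk_split: "Bk k = Bk' k + (if 2*k+3 \<le> N then Ck k else 0)"
proof (cases "2*k+3 \<le> N")
  case True
  have e: "{k+2..N-k-1} = insert (N-k-1) {k+2..N-k-2}" using True by auto
  have n: "N-k-1 \<notin> {k+2..N-k-2}" by auto
  show ?thesis unfolding Bk_def Bk'_def Ck_def e using True n by (simp add: add.commute)
next
  case False
  have e: "{k+2..N-k-1} = {}" "{k+2..N-k-2} = {}" using False by auto
  show ?thesis unfolding Bk_def Bk'_def e using False by simp
qed

lemma filter_set: "{k\<in>{0..<zz}. 2*k+3 \<le> N} = {..<n1}"
  using zz_facts by auto

lemma rr_eq: "rr = (\<Sum>k\<in>{0..<zz}. tsmult (nu (k+1)) (Ak k + Bk' k))
   + (\<Sum>k\<in>{..<n1}. wedge (E (k+1) (N-k-1)) (Dp (Suc k)))"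
proof -
  have 1: "(\<Sum>k\<in>{0..<zz}. tsmult (nu (k+1)) (Ak k + Bk k)) =
     (\<Sum>k\<in>{0..<zz}. tsmult (nu (k+1)) (Ak k + Bk' k)) + (\<Sum>k\<in>{0..<zz}. if 2*k+3 \<le> N then tsmult (nu (k+1)) (Ck k) else 0)"
    unfolding Bk_split by (simp add: tsmult_add tsmult_zero sum.distrib add.assoc if_distrib[of "tsmult _"] cong: if_cong)
  have 2: "(\<Sum>k\<in>{0..<zz}. if 2*k+3 \<le> N then tsmult (nu (k+1)) (Ck k) else 0) = (\<Sum>k\<in>{..<n1}. tsmult (nu (k+1)) (Ck k))"
    by (simp only: sum.inter_filter[OF finite_atLeastLessThan, symmetric] filter_set)
  have 3: "(\<Sum>i\<in>{1..n1}. tsmult (rho i) (wedge (Hperp N i) (E i (N-i)))) =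
     (\<Sum>k\<in>{..<n1}. tsmult (rho (Suc k)) (wedge (Hperp N (Suc k)) (E (Suc k) (N - Suc k))))"
  proof -
    have "{1..n1} = {Suc 0..n1}" by simp
    then show ?thesis by (simp only: sum.atLeast1_atMost_eq)
  qed
  have 4: "tsmult (nu (k+1)) (Ck k) + tsmult (rho (Suc k)) (wedge (Hperp N (Suc k)) (E (Suc k) (N - Suc k)))
      = wedge (E (k+1) (N-k-1)) (Dp (Suc k))" for k
  proof -
    have e: "N + 1 - Suc k = N - k" "N - Suc k = N - k - 1" by auto
    show ?thesis unfolding Ck_def Dp_def e
      by (simp add: fun_eq_iff wedge_def tens_def tsmult_def algebra_simps)
  qed
  show ?thesis unfolding rr_eq0 1 2 3
    by (simp only: add.assoc sum.distrib[symmetric] 4)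
qed

lemma rr_tensor: "in_tensor2 cset rr"
proof -
  note zz = zz_facts
  have a: "in_tensor2 cset (tsmult (nu (k+1)) (Ak k + Bk' k))" if k: "k \<in> {0..<zz}" for k
  proof -
    have kk: "k + 1 \<le> zz" using k by auto
    have nc: "\<not> cnd (k+1)" using kk by (simp add: cnd_def)
    have "in_tensor2 cset (Ak k)" unfolding Ak_def
      using kk nc zz by (intro in_tensor2_wedge cset_subsp HP_cset E_cset) (auto simp: Rg_def)
    moreover have "in_tensor2 cset (Bk' k)" unfolding Bk'_def
    proof (intro in_tensor2_sum in_tensor2_wedge cset_subsp E_cset)
      fix s assume "s \<in> {k+2..N-k-2}"
      then show "(k+1, s) \<in> Rg" "(s, N-k) \<in> Rg" using kk nc zz by (auto simp: Rg_def cnd_def)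
    qed
    ultimately show ?thesis by (intro in_tensor2_tsmult cset_subsp in_tensor2_add)
  qed
  have b: "in_tensor2 cset (wedge (E (k+1) (N-k-1)) (Dp (Suc k)))" if k: "k \<in> {..<n1}" for k
  proof -
    have kk: "k + 1 \<le> n1" "2*(k+1)+1 \<le> N" "k+1 \<le> zz" using k n1_le[of "k+1"] by auto
    have nc: "\<not> cnd (k+1)" using kk by (simp add: cnd_def)
    show ?thesis using kk nc by (intro in_tensor2_wedge cset_subsp E_cset Dp_cset) (auto simp: Rg_def)
  qed
  show ?thesis unfolding rr_eq
    by (intro in_tensor2_add in_tensor2_sum a b)
qed

end

lemma card_U: "2 * card {(a,b). 1 \<le> a \<and> a < b \<and> b \<le> (n::nat)} = n * (n - 1)"
proof (induct n)
  case 0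
  have e: "{(a,b). 1 \<le> a \<and> a < b \<and> b \<le> (0::nat)} = {}" by auto
  show ?case unfolding e by simp
next
  case (Suc n)
  have e: "{(a,b). 1 \<le> a \<and> a < b \<and> b \<le> Suc n} = {(a,b). 1 \<le> a \<and> a < b \<and> b \<le> n} \<union> (\<lambda>a. (a, Suc n)) ` {1..n}"
    by auto
  have f: "finite {(a,b). 1 \<le> a \<and> a < b \<and> b \<le> n}"
    by (rule finite_subset[of _ "{1..n} \<times> {1..n}"]) auto
  have d: "{(a,b). 1 \<le> a \<and> a < b \<and> b \<le> n} \<inter> (\<lambda>a. (a, Suc n)) ` {1..n} = {}" by auto
  have c: "card ((\<lambda>a. (a, Suc n)) ` {1..n}) = n" by (subst card_image) (auto simp: inj_on_def)
  have "2 * card {(a,b). 1 \<le> a \<and> a < b \<and> b \<le> Suc n} = 2 * card {(a,b). 1 \<le> a \<and> a < b \<and> b \<le> n} + 2 * n"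
    unfolding e using f d c by (simp add: card_Un_disjoint)
  also have "\<dots> = n * (n - 1) + 2 * n" using Suc by simp
  also have "\<dots> = Suc n * (Suc n - 1)" by (cases n) (auto simp: algebra_simps)
  finally show ?case .
qed

context rset
begin

definition D0 :: "(nat \<times> nat) set" where "D0 = (\<lambda>a. (a,a)) ` {1..<N}"
definition II :: "(nat \<times> nat) set" where "II = Rg \<union> D0"
definition fb :: "nat \<times> nat \<Rightarrow> cmat" where
  "fb x = (if fst x = snd x then psi (E (fst x) (fst x) - E N N) else E (fst x) (snd x))"

lemma II_finite: "finite II" unfolding II_def D0_def using Rg_finite by simp

lemma fb_eval: assumes x: "x \<in> II" and y: "y \<in> II"
  shows "fb x (fst y) (snd y) = (if x = y then 1 else 0)"
proof -
  obtain c d where xc: "x = (c,d)" by (cases x)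
  obtain a b where ya: "y = (a,b)" by (cases y)
  show ?thesis
  proof (cases "x \<in> Rg")
    case True
    then have "c \<noteq> d" by (auto simp: Rg_def xc)
    then show ?thesis unfolding xc ya by (simp add: fb_def E_apply)
  next
    case False
    then have xd: "d = c" "1 \<le> c" "c < N" using x by (auto simp: II_def D0_def xc)
    show ?thesis
    proof (cases "y \<in> Rg")
      case True
      then have "a \<noteq> b" "\<not> (cnd a \<and> b = Suc a)" by (auto simp: Rg_def ya)
      then show ?thesis unfolding xc ya xd(1) by (auto simp: fb_def psi_def E_apply)
    next
      case False
      then have "b = a" "a < N" using y by (auto simp: II_def D0_def ya)
      then show ?thesis unfolding xc ya xd(1) using xd by (auto simp: fb_def psi_def E_apply)
    qed
  qed
qed

lemma fb_inj: "inj_on fb II"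
proof (rule inj_onI)
  fix x y assume xy: "x \<in> II" "y \<in> II" "fb x = fb y"
  have "fb x (fst y) (snd y) = 1" using fb_eval[OF xy(2) xy(2)] xy(3) by simp
  then show "x = y" using fb_eval[OF xy(1) xy(2)] by (auto split: if_splits)
qed

definition BB :: "cmat set" where "BB = fb ` II"

lemma BB_cset: "BB \<subseteq> cset"
proof
  fix v assume "v \<in> BB"
  then obtain x where x: "x \<in> II" "v = fb x" by (auto simp: BB_def)
  show "v \<in> cset"
  proof (cases "x \<in> Rg")
    case True
    then have "fst x \<noteq> snd x" by (auto simp: Rg_def)
    then show ?thesis using x True E_cset[of "fst x" "snd x"] by (simp add: fb_def)
  next
    case False
    then obtain a where a: "x = (a,a)" "1 \<le> a" "a < N" using x by (auto simp: II_def D0_def)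
    have "psi (E a a - E N N) \<in> cset"
    proof (rule psi_cset)
      show "E a a - E N N \<in> gl N" using a by (auto simp: gl_iff E_apply)
      show "\<And>i j. i \<noteq> j \<Longrightarrow> (E a a - E N N) i j = 0" by (simp add: E_apply)
      show "mtrace N (E a a - E N N) = 0" using a by (simp add: mtrace_def E_apply sum_subtractf)
    qed
    then show ?thesis using x a by (simp add: fb_def)
  qed
qed

lemma BB_indep: "\<not> mv.dependent BB"
proof
  assume "mv.dependent BB"
  then obtain u where u: "\<exists>v\<in>BB. u v \<noteq> 0" "(\<Sum>v\<in>BB. msmult (u v) v) = 0"
    using mv.dependent_finite[of BB] II_finite by (auto simp: BB_def)
  have s: "(\<Sum>x\<in>II. msmult (u (fb x)) (fb x)) = 0"
    using u(2) fb_inj by (simp add: BB_def sum.reindex)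
  have "u (fb y) = 0" if y: "y \<in> II" for y
  proof -
    have "0 = (\<Sum>x\<in>II. msmult (u (fb x)) (fb x)) (fst y) (snd y)" using s by simp
    also have "\<dots> = (\<Sum>x\<in>II. if x = y then u (fb y) else 0)"
      unfolding sum_fun_apply msmult_apply
      by (rule sum.cong[OF refl]) (use y in \<open>simp add: fb_eval\<close>)
    also have "\<dots> = u (fb y)" using y II_finite by simp
    finally show ?thesis by simp
  qed
  then show False using u(1) by (auto simp: BB_def)
qed

lemma diag_decomp: assumes y: "y \<in> gl N" "mtrace N y = 0"
  shows "(\<lambda>i j. if i = j then y i i else 0) = (\<Sum>a\<in>{1..<N}. msmult (y a a) (E a a - E N N))"
proof (rule ext, rule ext)
  fix i j
  have N1: "{1..N} = insert N {1..<N}" using N3 by auto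
  have tr: "y N N = - (\<Sum>a\<in>{1..<N}. y a a)"
    using y(2) unfolding mtrace_def N1 by (simp add: eq_neg_iff_add_eq_0 add.commute)
  have s1: "(\<Sum>a\<in>{1..<N}. y a a * E a a i j) = (if i = j \<and> i \<in> {1..<N} then y i i else 0)"
  proof -
    have "(\<Sum>a\<in>{1..<N}. y a a * E a a i j) = (\<Sum>a\<in>{1..<N}. if a = i then (if i = j then y i i else 0) else 0)"
      by (rule sum.cong[OF refl]) (auto simp: E_apply)
    also have "\<dots> = (if i = j \<and> i \<in> {1..<N} then y i i else 0)" by (simp only: sum.delta finite_atLeastLessThan) auto
    finally show ?thesis .
  qed
  have s2: "(\<Sum>a\<in>{1..<N}. y a a * E N N i j) = (if i = N \<and> j = N then (\<Sum>a\<in>{1..<N}. y a a) else 0)"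
    by (simp add: E_apply)
  have "(\<Sum>a\<in>{1..<N}. msmult (y a a) (E a a - E N N)) i j
      = (\<Sum>a\<in>{1..<N}. y a a * E a a i j) - (\<Sum>a\<in>{1..<N}. y a a * E N N i j)"
    unfolding sum_fun_apply by (simp add: sum_subtractf right_diff_distrib)
  also have "\<dots> = (if i = j \<and> i \<in> {1..<N} then y i i else 0) - (if i = N \<and> j = N then (\<Sum>a\<in>{1..<N}. y a a) else 0)"
    unfolding s1 s2 ..
  also have "\<dots> = (if i = j then y i i else 0)"
    using y(1) tr by (auto simp: gl_iff)
  finally show "(if i = j then y i i else 0) = (\<Sum>a\<in>{1..<N}. msmult (y a a) (E a a - E N N)) i j" by simp
qed

lemma cset_span: "cset \<subseteq> mv.span BB"
proof
  fix y assume y: "y \<in> cset"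
  have tr: "mtrace N y = 0" using y by (simp add: cset_def)
  have 1: "(\<Sum>x\<in>Rg. msmult (y (fst x) (snd x)) (E (fst x) (snd x))) \<in> mv.span BB"
  proof (rule mv.span_sum)
    fix x assume x: "x \<in> Rg"
    then have "fst x \<noteq> snd x" by (auto simp: Rg_def)
    then have "E (fst x) (snd x) = fb x" by (simp add: fb_def)
    moreover have "fb x \<in> BB" using x by (simp add: BB_def II_def)
    ultimately show "msmult (y (fst x) (snd x)) (E (fst x) (snd x)) \<in> mv.span BB"
      by (simp add: mv.span_base mv.span_scale)
  qed
  have 2: "psi (\<lambda>i j. if i = j then y i i else 0) \<in> mv.span BB"
    unfolding diag_decomp[OF cset_gl[OF y] tr] psi_sum psi_smult
  proof (rule mv.span_sum)
    fix a assume a: "a \<in> {1..<N}"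
    have "psi (E a a - E N N) = fb (a,a)" by (simp add: fb_def)
    moreover have "fb (a,a) \<in> BB" using a by (simp add: BB_def II_def D0_def)
    ultimately show "msmult (y a a) (psi (E a a - E N N)) \<in> mv.span BB"
      by (simp add: mv.span_base mv.span_scale)
  qed
  show "y \<in> mv.span BB" by (subst decomp[OF y]) (rule mv.span_add[OF 1 2])
qed

lemma card_Rg: "card Rg + (N - 1 - zz) = N * (N - 1) div 2"
proof -
  let ?U = "{(a,b). 1 \<le> a \<and> a < b \<and> b \<le> N}"
  let ?S = "(\<lambda>a. (a, Suc a)) ` {zz+1..N-1}"
  have fU: "finite ?U" by (rule finite_subset[of _ "{1..N} \<times> {1..N}"]) auto
  have SU: "?S \<subseteq> ?U" using zz_facts by auto
  have Rg_eq: "Rg = ?U - ?S" by (auto simp: Rg_def cnd_def)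
  have cS: "card ?S = N - 1 - zz" by (subst card_image) (auto simp: inj_on_def)
  have "card Rg = card ?U - card ?S" unfolding Rg_eq using SU fU by (simp add: card_Diff_subset finite_subset)
  moreover have "card ?S \<le> card ?U" using SU fU by (rule card_mono[rotated])
  moreover have "card ?U = N * (N - 1) div 2" using card_U[of N] by simp
  ultimately show ?thesis using cS by simp
qed

lemma card_II: "card II = (N^2 + N - 2 * ((N+1) div 2)) div 2"
proof -
  have d: "Rg \<inter> D0 = {}" by (auto simp: Rg_def D0_def)
  have fD: "finite D0" by (simp add: D0_def)
  have cD: "card D0 = N - 1" unfolding D0_def by (subst card_image) (auto simp: inj_on_def)
  have c: "card II = card Rg + (N - 1)" unfolding II_def using d fD Rg_finite cD by (simp add: card_Un_disjoint)
  obtain h where h: "N * (N - 1) = 2 * h" using card_U[of N] by metis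
  have hd: "N * (N - 1) div 2 = h" using h by simp
  have cR: "card Rg + (N - 1 - zz) = h" using card_Rg hd by simp
  have z: "zz \<le> N - 1" "(N+1) div 2 = N - zz" using zz_facts by auto
  have "card II = h + zz" using c cR z by linarith
  moreover have "N^2 + N - 2 * (N - zz) = 2 * (h + zz)"
  proof -
    have "N^2 + N = N * (N - 1) + 2 * N" using N3 by (cases N) (auto simp: power2_eq_square algebra_simps)
    then show ?thesis using h z by simp
  qed
  ultimately show ?thesis using z by simp
qed

lemma dim_cset: "mdim cset = (N^2 + N - 2 * ((N+1) div 2)) div 2"
proof -
  have "mv.dim cset = card BB"
    by (rule mv.dim_unique[OF BB_cset cset_span BB_indep refl])
  moreover have "card BB = card II" unfolding BB_def by (rule card_image[OF fb_inj])
  ultimately show ?thesis unfolding mdim_def card_II by simp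
qed

end

theorem mainTheorem7:
  fixes N :: nat and \<nu> \<rho> :: "nat \<Rightarrow> complex"
  assumes "N \<ge> 3"
    and "\<forall>k\<in>{1..N div 2}. \<nu> k \<noteq> 0"
    and "\<forall>i\<in>{1..(N+1) div 2 - 1}. \<rho> i \<noteq> 0"
  shows "\<exists>\<phi>. lie_hom_on N (galg N) \<phi> \<and> inj_on \<phi> (galg N) \<and> \<phi> ` galg N \<subseteq> borel N
            \<and> in_wedge2 (\<phi> ` galg N) (r_tensor N \<nu> \<rho>)
            \<and> nondegenerate N (\<phi> ` galg N) (r_tensor N \<nu> \<rho>)
            \<and> is_carrier N (r_tensor N \<nu> \<rho>) (\<phi> ` galg N)
            \<and> mdim (\<phi> ` galg N) = (N^2 + N - 2 * ((N+1) div 2)) div 2"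
proof -
  interpret R: rset N \<nu> \<rho> using assms by unfold_locales
  let ?r = "r_tensor N \<nu> \<rho>"
  have img: "R.phi ` galg N = R.cset" by (rule R.image_phi)
  have w2: "in_wedge2 R.cset ?r"
    unfolding in_wedge2_def using R.rr_tensor R.skew_rr unfolding skew_def by blast
  have into: "\<forall>F. induced_map N ?r F \<in> R.cset"
    using R.cset_subsp R.rr_tensor by (blast intro: induced_map_in)
  have onto: "\<forall>y\<in>R.cset. \<exists>F. induced_map N ?r F = y"
    using R.cset_sub_WW unfolding R.WW_def by blast
  have ker: "\<forall>F. induced_map N ?r F = 0 \<longrightarrow> (\<forall>a\<in>R.cset. pairing N F a = 0)"
  proof (intro allI impI ballI)
    fix F a assume F0: "induced_map N ?r F = 0" and a: "a \<in> R.cset"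
    obtain G where G: "a = induced_map N ?r G" using onto a by metis
    have "pairing N F a = - pairing N G (induced_map N ?r F)"
      unfolding G by (rule pairing_induced_skew[OF R.skew_rr])
    also have "\<dots> = 0" unfolding F0 by (simp add: pairing_def)
    finally show "pairing N F a = 0" .
  qed
  have nd: "nondegenerate N R.cset ?r"
    unfolding nondegenerate_def using w2 into onto ker by blast
  have car: "is_carrier N ?r R.cset"
    unfolding is_carrier_def
  proof (intro conjI allI impI)
    show "lie_subalgebra N R.cset" by (rule R.cset_lie)
    show "in_wedge2 R.cset ?r" by (rule w2)
    fix d assume d: "lie_subalgebra N d \<and> in_wedge2 d ?r"
    show "R.cset \<subseteq> d"
    proof
      fix y assume "y \<in> R.cset"
      then obtain F where "y = induced_map N ?r F" using onto by metis
      moreover have "induced_map N ?r F \<in> d"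
        using d by (intro induced_map_in lie_subalgebra_subsp) (auto simp: in_wedge2_def)
      ultimately show "y \<in> d" by simp
    qed
  qed
  show ?thesis
    apply (rule exI[of _ R.phi])
    unfolding img
    using R.lie_hom R.phi_inj R.cset_borel w2 nd car R.dim_cset by blast
qed

end
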